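(* Let $n\ge1$, let $\mathcal{Q}\subseteq H^2(\mathbb{T}^n)$ be a quotient module and $\theta_{\mathcal{Q}}=P_{\mathcal{Q}}1$. If $\theta_{\mathcal{Q}}\in H^\infty(\mathbb{D}^n)$, then $S_{\theta_{\mathcal{Q}}}=P_{\mathcal{Q}}T_{\theta_{\mathcal{Q}}}|_{\mathcal{Q}}=I_{\mathcal{Q}}$.
   Context: $H^2(\mathbb{T}^n)$ is the Hardy space of the polydisc $\mathbb{D}^n$; $T_\varphi f=\varphi f$ for $\varphi\in H^\infty(\mathbb{D}^n)$, $T_{z_i}$ multiplication by $z_i$. A closed subspace $\mathcal{Q}$ is a quotient module if $T_{z_i}^*\mathcal{Q}\subseteq\mathcal{Q}$ for all $i$; $P_{\mathcal{Q}}$ is the orthogonal projection onto $\mathcal{Q}$. *)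

theory Defs
  imports "HOL-Analysis.Analysis"
begin

text \<open>Elements of H^2 of the polydisc D^n are represented by their Taylor coefficient
  families indexed by multi-indices alpha :: 'n => nat, where the finite type 'n has
  n elements (n >= 1 automatically).\<close>

type_synonym 'n coeffs = "('n \<Rightarrow> nat) \<Rightarrow> complex"

definition H2 :: "('n::finite) coeffs set" where
  "H2 = {f. (\<lambda>\<alpha>. (cmod (f \<alpha>))\<^sup>2) summable_on UNIV}"

definition h2_inner :: "('n::finite) coeffs \<Rightarrow> 'n coeffs \<Rightarrow> complex" where
  "h2_inner f g = (\<Sum>\<^sub>\<infinity>\<alpha>. f \<alpha> * cnj (g \<alpha>))"

definition h2_norm :: "('n::finite) coeffs \<Rightarrow> real" where
  "h2_norm f = sqrt (\<Sum>\<^sub>\<infinity>\<alpha>. (cmod (f \<alpha>))\<^sup>2)"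

definition h2_eval :: "('n::finite) coeffs \<Rightarrow> ('n \<Rightarrow> complex) \<Rightarrow> complex" where
  "h2_eval f z = (\<Sum>\<^sub>\<infinity>\<alpha>. f \<alpha> * (\<Prod>i\<in>UNIV. z i ^ \<alpha> i))"

definition polydisc :: "('n::finite \<Rightarrow> complex) set" where
  "polydisc = {z. \<forall>i. norm (z i) < 1}"

definition Hinf :: "('n::finite) coeffs set" where
  "Hinf = {f \<in> H2. \<exists>M. \<forall>z\<in>polydisc. cmod (h2_eval f z) \<le> M}"

text \<open>Product of power series (Cauchy product): T_phi f = phi f.\<close>
definition mult :: "('n::finite) coeffs \<Rightarrow> 'n coeffs \<Rightarrow> 'n coeffs" where
  "mult \<phi> f = (\<lambda>\<alpha>. \<Sum>\<beta>\<in>{\<beta>. \<beta> \<le> \<alpha>}. \<phi> \<beta> * f (\<lambda>i. \<alpha> i - \<beta> i))"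

definition Tz_adj :: "'n::finite \<Rightarrow> 'n coeffs \<Rightarrow> 'n coeffs" where
  "Tz_adj i f = (\<lambda>\<alpha>. f (\<alpha>(i := Suc (\<alpha> i))))"

definition closed_subspace :: "('n::finite) coeffs set \<Rightarrow> bool" where
  "closed_subspace Q \<longleftrightarrow> Q \<subseteq> H2 \<and> (\<lambda>\<alpha>. 0) \<in> Q \<and>
     (\<forall>f\<in>Q. \<forall>g\<in>Q. (\<lambda>\<alpha>. f \<alpha> + g \<alpha>) \<in> Q) \<and> (\<forall>c. \<forall>f\<in>Q. (\<lambda>\<alpha>. c * f \<alpha>) \<in> Q) \<and>
     (\<forall>x f. (\<forall>k. x k \<in> Q) \<and> f \<in> H2 \<and> (\<lambda>k. h2_norm (\<lambda>\<alpha>. x k \<alpha> - f \<alpha>)) \<longlonglongrightarrow> 0 \<longrightarrow> f \<in> Q)"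

definition quotient_module :: "('n::finite) coeffs set \<Rightarrow> bool" where
  "quotient_module Q \<longleftrightarrow> closed_subspace Q \<and> (\<forall>i. \<forall>f\<in>Q. Tz_adj i f \<in> Q)"

definition proj :: "('n::finite) coeffs set \<Rightarrow> 'n coeffs \<Rightarrow> 'n coeffs" where
  "proj Q f = (THE g. g \<in> Q \<and> (\<forall>h\<in>Q. h2_inner (\<lambda>\<alpha>. f \<alpha> - g \<alpha>) h = 0))"

definition one :: "('n::finite) coeffs" where
  "one = (\<lambda>\<alpha>. if \<alpha> = (\<lambda>i. 0) then 1 else 0)"

definition compression :: "('n::finite) coeffs set \<Rightarrow> 'n coeffs \<Rightarrow> 'n coeffs \<Rightarrow> 'n coeffs" where
  "compression Q \<phi> f = proj Q (mult \<phi> f)"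

end

theory Submission
  imports Defs
begin


definition nsq :: "('n::finite) coeffs \<Rightarrow> real" where
  "nsq f = (\<Sum>\<^sub>\<infinity>\<alpha>. (cmod (f \<alpha>))\<^sup>2)"

lemma summable_on_div_real: "(f::'a\<Rightarrow>real) summable_on A \<Longrightarrow> (\<lambda>x. f x / c) summable_on A"
  using summable_on_cmult_left[of f A "1/c"] by simp

lemma infsum_div_real: "infsum (\<lambda>x. (f::'a\<Rightarrow>real) x / c) A = infsum f A / c"
  using infsum_cmult_left'[of f "1/c" A] by simp

lemma H2_iff: "f \<in> H2 \<longleftrightarrow> (\<lambda>\<alpha>. (cmod (f \<alpha>))\<^sup>2) summable_on UNIV"
  by (simp add: H2_def)

lemma nsq_nonneg: "nsq f \<ge> 0"
  unfolding nsq_def by (rule infsum_nonneg) auto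

lemma h2_norm_nsq: "h2_norm f = sqrt (nsq f)"
  by (simp add: h2_norm_def nsq_def)

lemma coeff_le_nsq: assumes "f \<in> H2" shows "(cmod (f \<alpha>))\<^sup>2 \<le> nsq f"
proof -
  have "sum (\<lambda>\<alpha>. (cmod (f \<alpha>))\<^sup>2) {\<alpha>} \<le> nsq f"
    unfolding nsq_def by (rule finite_sum_le_infsum) (use assms in \<open>auto simp: H2_iff\<close>)
  thus ?thesis by simp
qed

lemma H2_add: assumes "f \<in> H2" "g \<in> H2" shows "(\<lambda>\<alpha>. f \<alpha> + g \<alpha>) \<in> H2"
proof -
  have s: "(\<lambda>\<alpha>. 2 * (cmod (f \<alpha>))\<^sup>2 + 2 * (cmod (g \<alpha>))\<^sup>2) summable_on UNIV"
    using assms by (intro summable_on_add summable_on_cmult_right) (auto simp: H2_iff)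
  have "(cmod (f \<alpha> + g \<alpha>))\<^sup>2 \<le> 2 * (cmod (f \<alpha>))\<^sup>2 + 2 * (cmod (g \<alpha>))\<^sup>2" for \<alpha>
  proof -
    have "cmod (f \<alpha> + g \<alpha>) \<le> cmod (f \<alpha>) + cmod (g \<alpha>)" by (rule norm_triangle_ineq)
    hence "(cmod (f \<alpha> + g \<alpha>))\<^sup>2 \<le> (cmod (f \<alpha>) + cmod (g \<alpha>))\<^sup>2"
      by (simp add: power_mono)
    also have "\<dots> \<le> 2 * (cmod (f \<alpha>))\<^sup>2 + 2 * (cmod (g \<alpha>))\<^sup>2"
      by (smt (verit) power2_sum sum_squares_bound)
    finally show ?thesis .
  qed
  thus ?thesis unfolding H2_iff
    by (intro summable_on_comparison_test[OF s]) auto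
qed

lemma H2_scale: assumes "f \<in> H2" shows "(\<lambda>\<alpha>. c * f \<alpha>) \<in> H2"
proof -
  have "(\<lambda>\<alpha>. (cmod c)\<^sup>2 * (cmod (f \<alpha>))\<^sup>2) summable_on UNIV"
    using assms by (intro summable_on_cmult_right) (auto simp: H2_iff)
  thus ?thesis by (simp add: H2_iff norm_mult power_mult_distrib)
qed

lemma H2_uminus: assumes "f \<in> H2" shows "(\<lambda>\<alpha>. - f \<alpha>) \<in> H2"
  using H2_scale[OF assms, of "-1"] by simp

lemma H2_diff: assumes "f \<in> H2" "g \<in> H2" shows "(\<lambda>\<alpha>. f \<alpha> - g \<alpha>) \<in> H2"
  using H2_add[OF assms(1) H2_uminus[OF assms(2)]] by simp

lemma H2_finite_support: assumes "finite C" "\<And>\<alpha>. \<alpha> \<notin> C \<Longrightarrow> f \<alpha> = 0" shows "f \<in> H2"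
proof -
  have "(\<lambda>\<alpha>. (cmod (f \<alpha>))\<^sup>2) summable_on C" using assms by simp
  hence "(\<lambda>\<alpha>. (cmod (f \<alpha>))\<^sup>2) summable_on UNIV"
    by (subst summable_on_cong_neutral[of C UNIV]) (use assms in auto)
  thus ?thesis by (simp add: H2_iff)
qed

lemma nsq_finite_support: assumes "finite C" "\<And>\<alpha>. \<alpha> \<notin> C \<Longrightarrow> f \<alpha> = 0"
  shows "nsq f = (\<Sum>\<alpha>\<in>C. (cmod (f \<alpha>))\<^sup>2)"
proof -
  have "nsq f = infsum (\<lambda>\<alpha>. (cmod (f \<alpha>))\<^sup>2) C"
    unfolding nsq_def by (rule infsum_cong_neutral) (use assms in auto)
  thus ?thesis using assms by simp
qed

lemma prod_abs_summable: assumes "f \<in> H2" "g \<in> H2"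
  shows "(\<lambda>\<alpha>. norm (f \<alpha> * cnj (g \<alpha>))) summable_on UNIV"
proof -
  have s: "(\<lambda>\<alpha>. ((cmod (f \<alpha>))\<^sup>2 + (cmod (g \<alpha>))\<^sup>2) / 2) summable_on UNIV"
    using assms unfolding H2_iff by (intro summable_on_div_real summable_on_add)
  have "norm (f \<alpha> * cnj (g \<alpha>)) \<le> ((cmod (f \<alpha>))\<^sup>2 + (cmod (g \<alpha>))\<^sup>2) / 2" for \<alpha>
  proof -
    have "0 \<le> (cmod (f \<alpha>) - cmod (g \<alpha>))\<^sup>2" by simp
    thus ?thesis by (simp add: norm_mult power2_eq_square algebra_simps)
  qed
  thus ?thesis by (intro summable_on_comparison_test[OF s]) simp_all
qed

lemma prod_summable: assumes "f \<in> H2" "g \<in> H2"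
  shows "(\<lambda>\<alpha>. f \<alpha> * cnj (g \<alpha>)) summable_on UNIV"
  using abs_summable_summable[OF prod_abs_summable[OF assms]] .

lemma h2_inner_add_left: assumes "f \<in> H2" "g \<in> H2" "h \<in> H2"
  shows "h2_inner (\<lambda>\<alpha>. f \<alpha> + g \<alpha>) h = h2_inner f h + h2_inner g h"
  unfolding h2_inner_def using prod_summable[OF assms(1,3)] prod_summable[OF assms(2,3)]
  by (simp add: distrib_right infsum_add)

lemma h2_inner_scale_left: "h2_inner (\<lambda>\<alpha>. c * f \<alpha>) h = c * h2_inner f h"
  unfolding h2_inner_def
  by (subst infsum_cmult_right'[symmetric]) (simp add: mult.assoc)

lemma h2_inner_uminus_left: "h2_inner (\<lambda>\<alpha>. - f \<alpha>) h = - h2_inner f h"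
  using h2_inner_scale_left[of "-1" f h] by simp

lemma h2_inner_diff_left: assumes "f \<in> H2" "g \<in> H2" "h \<in> H2"
  shows "h2_inner (\<lambda>\<alpha>. f \<alpha> - g \<alpha>) h = h2_inner f h - h2_inner g h"
  using h2_inner_add_left[OF assms(1) H2_uminus[OF assms(2)] assms(3)] h2_inner_uminus_left[of g h]
  by simp

lemma h2_inner_self: assumes "f \<in> H2" shows "h2_inner f f = complex_of_real (nsq f)"
proof -
  have "h2_inner f f = (\<Sum>\<^sub>\<infinity>\<alpha>. complex_of_real ((cmod (f \<alpha>))\<^sup>2))"
    unfolding h2_inner_def by (intro infsum_cong) (metis complex_norm_square)
  also have "\<dots> = complex_of_real (nsq f)"
    unfolding nsq_def using assms unfolding H2_iff
    by (intro infsumI) (simp add: has_sum_of_real_iff del: of_real_power)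
  finally show ?thesis .
qed

lemma h2_inner_bound: assumes "u \<in> H2" "h \<in> H2" "\<tau> > 0"
  shows "cmod (h2_inner u h) \<le> (nsq u / \<tau> + \<tau> * nsq h) / 2"
proof -
  have "cmod (h2_inner u h) \<le> (\<Sum>\<^sub>\<infinity>\<alpha>. norm (u \<alpha> * cnj (h \<alpha>)))"
    unfolding h2_inner_def by (rule norm_infsum_bound) (rule prod_abs_summable[OF assms(1,2)])
  also have "\<dots> \<le> (\<Sum>\<^sub>\<infinity>\<alpha>. ((cmod (u \<alpha>))\<^sup>2 / \<tau> + \<tau> * (cmod (h \<alpha>))\<^sup>2) / 2)"
  proof (rule infsum_mono)
    show "(\<lambda>\<alpha>. norm (u \<alpha> * cnj (h \<alpha>))) summable_on UNIV"
      using prod_abs_summable[OF assms(1,2)] .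
    show "(\<lambda>\<alpha>. ((cmod (u \<alpha>))\<^sup>2 / \<tau> + \<tau> * (cmod (h \<alpha>))\<^sup>2) / 2) summable_on UNIV"
      using assms unfolding H2_iff by (intro summable_on_div_real summable_on_add
          summable_on_cmult_right)
    fix \<alpha>
    have "0 \<le> (cmod (u \<alpha>) - \<tau> * cmod (h \<alpha>))\<^sup>2" by simp
    hence "2 * \<tau> * (cmod (u \<alpha>) * cmod (h \<alpha>)) \<le> (cmod (u \<alpha>))\<^sup>2 + \<tau>\<^sup>2 * (cmod (h \<alpha>))\<^sup>2"
      by (simp add: power2_eq_square algebra_simps)
    hence "cmod (u \<alpha>) * cmod (h \<alpha>) \<le> ((cmod (u \<alpha>))\<^sup>2 / \<tau> + \<tau> * (cmod (h \<alpha>))\<^sup>2) / 2"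
      using assms(3) by (simp add: field_simps power2_eq_square)
    thus "norm (u \<alpha> * cnj (h \<alpha>)) \<le> ((cmod (u \<alpha>))\<^sup>2 / \<tau> + \<tau> * (cmod (h \<alpha>))\<^sup>2) / 2"
      by (simp add: norm_mult)
  qed
  also have "\<dots> = (nsq u / \<tau> + \<tau> * nsq h) / 2"
  proof -
    have s1: "(\<lambda>\<alpha>. (cmod (u \<alpha>))\<^sup>2 / \<tau>) summable_on UNIV"
      using assms unfolding H2_iff by (intro summable_on_div_real)
    have s2: "(\<lambda>\<alpha>. \<tau> * (cmod (h \<alpha>))\<^sup>2) summable_on UNIV"
      using assms unfolding H2_iff by (intro summable_on_cmult_right)
    show ?thesis
      unfolding nsq_def infsum_div_real infsum_add[OF s1 s2] infsum_cmult_right' by simp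
  qed
  finally show ?thesis .
qed



lemma infsum_diff_gen:
  fixes f g :: "'a \<Rightarrow> 'b::{topological_ab_group_add, t2_space}"
  assumes "f summable_on A" "g summable_on A"
  shows "infsum (\<lambda>x. f x - g x) A = infsum f A - infsum g A"
proof -
  have "infsum (\<lambda>x. f x + - g x) A = infsum f A + infsum (\<lambda>x. - g x) A"
    by (rule infsum_add) (use assms in \<open>auto simp: summable_on_uminus\<close>)
  thus ?thesis by (simp add: infsum_uminus)
qed

lemma summable_on_diff_gen:
  fixes f g :: "'a \<Rightarrow> 'b::{topological_ab_group_add}"
  assumes "f summable_on A" "g summable_on A"
  shows "(\<lambda>x. f x - g x) summable_on A"
proof -
  have "(\<lambda>x. f x + - g x) summable_on A"
    by (rule summable_on_add) (use assms in \<open>auto simp: summable_on_uminus\<close>)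
  thus ?thesis by simp
qed

lemma pt_expand: "(cmod (a - t * b))\<^sup>2 = (cmod a)\<^sup>2 - 2 * Re (cnj t * (a * cnj b)) + (cmod t)\<^sup>2 * (cmod b)\<^sup>2"
  by (simp only: cmod_power2) (simp add: power2_eq_square algebra_simps)

lemma nsq_scale: "nsq (\<lambda>\<alpha>. c * f \<alpha>) = (cmod c)\<^sup>2 * nsq f"
  unfolding nsq_def by (simp add: norm_mult power_mult_distrib infsum_cmult_right')

lemma nsq_expand:
  assumes "u \<in> H2" "h \<in> H2"
  shows "nsq (\<lambda>\<alpha>. u \<alpha> - t * h \<alpha>) = nsq u - 2 * Re (cnj t * h2_inner u h) + (cmod t)\<^sup>2 * nsq h"
proof -
  have s1: "(\<lambda>\<alpha>. (cmod (u \<alpha>))\<^sup>2) summable_on UNIV" using assms H2_iff by blast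
  have s3: "(\<lambda>\<alpha>. (cmod t)\<^sup>2 * (cmod (h \<alpha>))\<^sup>2) summable_on UNIV"
    using assms unfolding H2_iff by (intro summable_on_cmult_right)
  have s2': "(\<lambda>\<alpha>. cnj t * (u \<alpha> * cnj (h \<alpha>))) summable_on UNIV"
    by (intro summable_on_cmult_right prod_summable assms)
  have s2: "(\<lambda>\<alpha>. 2 * Re (cnj t * (u \<alpha> * cnj (h \<alpha>)))) summable_on UNIV"
    using summable_on_Re[OF s2'] by (intro summable_on_cmult_right)
  have "nsq (\<lambda>\<alpha>. u \<alpha> - t * h \<alpha>) = (\<Sum>\<^sub>\<infinity>\<alpha>. (cmod (u \<alpha>))\<^sup>2 - 2 * Re (cnj t * (u \<alpha> * cnj (h \<alpha>))) + (cmod t)\<^sup>2 * (cmod (h \<alpha>))\<^sup>2)"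
    unfolding nsq_def by (simp only: pt_expand)
  also have "\<dots> = nsq u - (\<Sum>\<^sub>\<infinity>\<alpha>. 2 * Re (cnj t * (u \<alpha> * cnj (h \<alpha>)))) + (cmod t)\<^sup>2 * nsq h"
    unfolding infsum_add[OF summable_on_diff_gen[OF s1 s2] s3] infsum_diff_gen[OF s1 s2]
    by (simp add: nsq_def infsum_cmult_right')
  also have "(\<Sum>\<^sub>\<infinity>\<alpha>. 2 * Re (cnj t * (u \<alpha> * cnj (h \<alpha>)))) = 2 * Re (cnj t * h2_inner u h)"
    unfolding h2_inner_def infsum_cmult_right' infsum_Re[OF s2'] by simp
  finally show ?thesis .
qed

lemma parallelogram:
  assumes "a \<in> H2" "b \<in> H2"
  shows "nsq (\<lambda>\<alpha>. a \<alpha> - b \<alpha>) + nsq (\<lambda>\<alpha>. a \<alpha> + b \<alpha>) = 2 * nsq a + 2 * nsq b"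
proof -
  have s1: "(\<lambda>\<alpha>. (cmod (a \<alpha> - b \<alpha>))\<^sup>2) summable_on UNIV" using H2_diff[OF assms] by (simp add: H2_iff)
  have s2: "(\<lambda>\<alpha>. (cmod (a \<alpha> + b \<alpha>))\<^sup>2) summable_on UNIV" using H2_add[OF assms] by (simp add: H2_iff)
  have s3: "(\<lambda>\<alpha>. 2 * (cmod (a \<alpha>))\<^sup>2) summable_on UNIV" using assms unfolding H2_iff by (intro summable_on_cmult_right)
  have s4: "(\<lambda>\<alpha>. 2 * (cmod (b \<alpha>))\<^sup>2) summable_on UNIV" using assms unfolding H2_iff by (intro summable_on_cmult_right)
  have pt: "(cmod (a \<alpha> - b \<alpha>))\<^sup>2 + (cmod (a \<alpha> + b \<alpha>))\<^sup>2 = 2 * (cmod (a \<alpha>))\<^sup>2 + 2 * (cmod (b \<alpha>))\<^sup>2" for \<alpha>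
    by (simp only: cmod_power2) (simp add: power2_eq_square algebra_simps)
  have "nsq (\<lambda>\<alpha>. a \<alpha> - b \<alpha>) + nsq (\<lambda>\<alpha>. a \<alpha> + b \<alpha>) = (\<Sum>\<^sub>\<infinity>\<alpha>. (cmod (a \<alpha> - b \<alpha>))\<^sup>2 + (cmod (a \<alpha> + b \<alpha>))\<^sup>2)"
    unfolding nsq_def infsum_add[OF s1 s2] ..
  also have "\<dots> = (\<Sum>\<^sub>\<infinity>\<alpha>. 2 * (cmod (a \<alpha>))\<^sup>2 + 2 * (cmod (b \<alpha>))\<^sup>2)" by (simp only: pt)
  also have "\<dots> = 2 * nsq a + 2 * nsq b"
    unfolding infsum_add[OF s3 s4] nsq_def infsum_cmult_right' ..
  finally show ?thesis .
qed

lemma fatou_nsq: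
  assumes lim: "\<And>\<alpha>. (\<lambda>k. u k \<alpha>) \<longlonglongrightarrow> v \<alpha>"
    and ev: "eventually (\<lambda>k. u k \<in> H2 \<and> nsq (u k) \<le> C) sequentially"
  shows "v \<in> H2 \<and> nsq v \<le> C"
proof -
  have fin: "sum (\<lambda>\<alpha>. (cmod (v \<alpha>))\<^sup>2) F \<le> C" if "finite F" for F
  proof -
    have l: "(\<lambda>k. sum (\<lambda>\<alpha>. (cmod (u k \<alpha>))\<^sup>2) F) \<longlonglongrightarrow> sum (\<lambda>\<alpha>. (cmod (v \<alpha>))\<^sup>2) F"
      by (intro tendsto_sum tendsto_power tendsto_norm lim)
    have "eventually (\<lambda>k. sum (\<lambda>\<alpha>. (cmod (u k \<alpha>))\<^sup>2) F \<le> C) sequentially"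
      using ev
    proof eventually_elim
      case (elim k)
      have "sum (\<lambda>\<alpha>. (cmod (u k \<alpha>))\<^sup>2) F \<le> nsq (u k)"
        unfolding nsq_def by (rule finite_sum_le_infsum) (use elim that in \<open>auto simp: H2_iff\<close>)
      with elim show ?case by linarith
    qed
    thus ?thesis using tendsto_le[OF trivial_limit_sequentially tendsto_const l] by blast
  qed
  have sv: "(\<lambda>\<alpha>. (cmod (v \<alpha>))\<^sup>2) summable_on UNIV"
    by (rule nonneg_bdd_above_summable_on) (auto intro!: bdd_aboveI2 fin)
  moreover have "nsq v \<le> C"
    unfolding nsq_def by (rule infsum_le_finite_sums[OF sv]) (rule fin)
  ultimately show ?thesis by (simp add: H2_iff)
qed

lemma cs_parts:
  assumes "closed_subspace Q"
  shows cs_H2: "Q \<subseteq> H2" and cs_0: "(\<lambda>\<alpha>. 0) \<in> Q"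
    and cs_add: "\<And>f g. f \<in> Q \<Longrightarrow> g \<in> Q \<Longrightarrow> (\<lambda>\<alpha>. f \<alpha> + g \<alpha>) \<in> Q"
    and cs_sc: "\<And>c f. f \<in> Q \<Longrightarrow> (\<lambda>\<alpha>. c * f \<alpha>) \<in> Q"
    and cs_cl: "\<And>y f. (\<forall>k. y k \<in> Q) \<Longrightarrow> f \<in> H2 \<Longrightarrow> (\<lambda>k. h2_norm (\<lambda>\<alpha>. y k \<alpha> - f \<alpha>)) \<longlonglongrightarrow> 0 \<Longrightarrow> f \<in> Q"
proof -
  note c = assms[unfolded closed_subspace_def]
  show "Q \<subseteq> H2" using conjunct1[OF c] .
  show "(\<lambda>\<alpha>. 0) \<in> Q" using conjunct1[OF conjunct2[OF c]] .
  show "\<And>f g. f \<in> Q \<Longrightarrow> g \<in> Q \<Longrightarrow> (\<lambda>\<alpha>. f \<alpha> + g \<alpha>) \<in> Q"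
    using conjunct1[OF conjunct2[OF conjunct2[OF c]]] by blast
  show "\<And>c f. f \<in> Q \<Longrightarrow> (\<lambda>\<alpha>. c * f \<alpha>) \<in> Q"
    using conjunct1[OF conjunct2[OF conjunct2[OF conjunct2[OF c]]]] by blast
  show "\<And>y f. (\<forall>k. y k \<in> Q) \<Longrightarrow> f \<in> H2 \<Longrightarrow> (\<lambda>k. h2_norm (\<lambda>\<alpha>. y k \<alpha> - f \<alpha>)) \<longlonglongrightarrow> 0 \<Longrightarrow> f \<in> Q"
  proof -
    fix y f assume "\<forall>k. y k \<in> Q" "f \<in> H2" "(\<lambda>k. h2_norm (\<lambda>\<alpha>. y k \<alpha> - f \<alpha>)) \<longlonglongrightarrow> 0"
    thus "f \<in> Q" using conjunct2[OF conjunct2[OF conjunct2[OF conjunct2[OF c]]], rule_format, of y f] by blast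
  qed
qed

lemma closed_subspace_diff: assumes "closed_subspace Q" "f \<in> Q" "g \<in> Q"
  shows "(\<lambda>\<alpha>. f \<alpha> - g \<alpha>) \<in> Q"
proof -
  have "(\<lambda>\<alpha>. - 1 * g \<alpha>) \<in> Q" using cs_sc[OF assms(1,3)] .
  hence "(\<lambda>\<alpha>. f \<alpha> + - 1 * g \<alpha>) \<in> Q" using cs_add[OF assms(1,2)] by blast
  thus ?thesis by simp
qed

lemma proj_exists:
  assumes Q: "closed_subspace Q" and x: "x \<in> H2"
  shows "\<exists>g\<in>Q. \<forall>h\<in>Q. h2_inner (\<lambda>\<alpha>. x \<alpha> - g \<alpha>) h = 0"
proof -
  have QH: "Q \<subseteq> H2" and Q0: "(\<lambda>\<alpha>. 0) \<in> Q"
    and Qadd: "\<And>f g. f \<in> Q \<Longrightarrow> g \<in> Q \<Longrightarrow> (\<lambda>\<alpha>. f \<alpha> + g \<alpha>) \<in> Q"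
    and Qsc: "\<And>c f. f \<in> Q \<Longrightarrow> (\<lambda>\<alpha>. c * f \<alpha>) \<in> Q"
    and Qcl: "\<And>y f. (\<forall>k. y k \<in> Q) \<Longrightarrow> f \<in> H2 \<Longrightarrow> (\<lambda>k. h2_norm (\<lambda>\<alpha>. y k \<alpha> - f \<alpha>)) \<longlonglongrightarrow> 0 \<Longrightarrow> f \<in> Q"
    using cs_parts[OF Q] by blast+
  define D where "D = (\<lambda>g. nsq (\<lambda>\<alpha>. x \<alpha> - g \<alpha>)) ` Q"
  define d where "d = Inf D"
  have Dne: "D \<noteq> {}" using Q0 by (auto simp: D_def)
  have Dbdd: "bdd_below D" unfolding D_def by (rule bdd_belowI[of _ 0]) (auto intro: nsq_nonneg)
  have d_le: "d \<le> nsq (\<lambda>\<alpha>. x \<alpha> - g \<alpha>)" if "g \<in> Q" for g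
    unfolding d_def by (rule cInf_lower[OF _ Dbdd]) (use that in \<open>auto simp: D_def\<close>)
  have "\<exists>g\<in>Q. nsq (\<lambda>\<alpha>. x \<alpha> - g \<alpha>) < d + 1 / real (Suc k)" for k
  proof -
    have "Inf D < d + 1 / real (Suc k)" by (simp add: d_def)
    from cInf_lessD[OF Dne this] show ?thesis by (auto simp: D_def)
  qed
  then obtain G where GQ: "\<And>k. G k \<in> Q" and Gd: "\<And>k. nsq (\<lambda>\<alpha>. x \<alpha> - G k \<alpha>) < d + 1 / real (Suc k)"
    by metis
  have GH: "G k \<in> H2" for k using GQ QH by auto
  have par: "nsq (\<lambda>\<alpha>. G j \<alpha> - G k \<alpha>) \<le> 2 / real (Suc j) + 2 / real (Suc k)" for j k
  proof -
    define m where "m = (\<lambda>\<alpha>. (1/2) * (G j \<alpha> + G k \<alpha>))"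
    have mQ: "m \<in> Q" unfolding m_def by (intro Qsc Qadd GQ)
    have e: "nsq (\<lambda>\<alpha>. (x \<alpha> - G k \<alpha>) - (x \<alpha> - G j \<alpha>)) + nsq (\<lambda>\<alpha>. (x \<alpha> - G k \<alpha>) + (x \<alpha> - G j \<alpha>))
        = 2 * nsq (\<lambda>\<alpha>. x \<alpha> - G k \<alpha>) + 2 * nsq (\<lambda>\<alpha>. x \<alpha> - G j \<alpha>)"
      by (rule parallelogram) (auto intro: H2_diff x GH)
    have eq1: "(\<lambda>\<alpha>. (x \<alpha> - G k \<alpha>) - (x \<alpha> - G j \<alpha>)) = (\<lambda>\<alpha>. G j \<alpha> - G k \<alpha>)" by auto
    have eq2: "(\<lambda>\<alpha>. (x \<alpha> - G k \<alpha>) + (x \<alpha> - G j \<alpha>)) = (\<lambda>\<alpha>. 2 * (x \<alpha> - m \<alpha>))"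
      by (auto simp: m_def algebra_simps)
    have eq3: "nsq (\<lambda>\<alpha>. 2 * (x \<alpha> - m \<alpha>)) = 4 * nsq (\<lambda>\<alpha>. x \<alpha> - m \<alpha>)"
      by (subst nsq_scale) simp
    have e': "nsq (\<lambda>\<alpha>. G j \<alpha> - G k \<alpha>) + 4 * nsq (\<lambda>\<alpha>. x \<alpha> - m \<alpha>) = 2 * nsq (\<lambda>\<alpha>. x \<alpha> - G k \<alpha>) + 2 * nsq (\<lambda>\<alpha>. x \<alpha> - G j \<alpha>)"
      using e unfolding eq1 eq2 eq3 .
    have "d \<le> nsq (\<lambda>\<alpha>. x \<alpha> - m \<alpha>)" using d_le mQ by blast
    thus ?thesis using Gd[of j] Gd[of k] e' by linarith
  qed
  have cauchy_nsq: "\<exists>K. \<forall>j\<ge>K. \<forall>k\<ge>K. nsq (\<lambda>\<alpha>. G j \<alpha> - G k \<alpha>) < \<epsilon>" if eps: "\<epsilon> > 0" for \<epsilon>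
  proof -
    obtain K where K: "inverse (real (Suc K)) < \<epsilon> / 4" using reals_Archimedean[of "\<epsilon>/4"] eps by (metis zero_less_divide_iff zero_less_numeral)
    have "nsq (\<lambda>\<alpha>. G j \<alpha> - G k \<alpha>) < \<epsilon>" if "j \<ge> K" "k \<ge> K" for j k
    proof -
      have "2 / real (Suc j) \<le> 2 / real (Suc K)" "2 / real (Suc k) \<le> 2 / real (Suc K)"
        using that by (auto intro!: divide_left_mono)
      moreover have "2 / real (Suc K) < \<epsilon> / 2" using K by (simp add: inverse_eq_divide)
      ultimately show ?thesis using par[of j k] by linarith
    qed
    thus ?thesis by blast
  qed
  have "Cauchy (\<lambda>k. G k \<alpha>)" for \<alpha>
  proof (rule metric_CauchyI)
    fix e :: real assume e: "e > 0"
    obtain K where K: "\<forall>j\<ge>K. \<forall>k\<ge>K. nsq (\<lambda>\<alpha>. G j \<alpha> - G k \<alpha>) < e\<^sup>2"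
      using cauchy_nsq[of "e\<^sup>2"] e by auto
    have "dist (G j \<alpha>) (G k \<alpha>) < e" if "j \<ge> K" "k \<ge> K" for j k
    proof -
      have "(cmod (G j \<alpha> - G k \<alpha>))\<^sup>2 < e\<^sup>2"
        using coeff_le_nsq[OF H2_diff[OF GH[of j] GH[of k]], of \<alpha>] K that by force
      hence "cmod (G j \<alpha> - G k \<alpha>) < e" using e by (simp add: power_less_imp_less_base)
      thus ?thesis by (simp add: dist_norm)
    qed
    thus "\<exists>M. \<forall>m\<ge>M. \<forall>n\<ge>M. dist (G m \<alpha>) (G n \<alpha>) < e" by blast
  qed
  then obtain g where Gg: "\<And>\<alpha>. (\<lambda>k. G k \<alpha>) \<longlonglongrightarrow> g \<alpha>"
    unfolding Cauchy_convergent_iff convergent_def by metis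
  have tail: "(\<lambda>\<alpha>. G k \<alpha> - g \<alpha>) \<in> H2 \<and> nsq (\<lambda>\<alpha>. G k \<alpha> - g \<alpha>) \<le> \<epsilon>"
    if "\<forall>j\<ge>K. \<forall>k\<ge>K. nsq (\<lambda>\<alpha>. G j \<alpha> - G k \<alpha>) < \<epsilon>" "k \<ge> K" for \<epsilon> K k
  proof (rule fatou_nsq[where u="\<lambda>j \<alpha>. G k \<alpha> - G j \<alpha>"])
    show "(\<lambda>j. G k \<alpha> - G j \<alpha>) \<longlonglongrightarrow> G k \<alpha> - g \<alpha>" for \<alpha> by (intro tendsto_diff tendsto_const Gg)
    show "\<forall>\<^sub>F j in sequentially. (\<lambda>\<alpha>. G k \<alpha> - G j \<alpha>) \<in> H2 \<and> nsq (\<lambda>\<alpha>. G k \<alpha> - G j \<alpha>) \<le> \<epsilon>"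
      using that by (auto simp: eventually_sequentially intro!: exI[of _ K] H2_diff GH less_imp_le)
  qed
  obtain K1 where K1: "\<forall>j\<ge>K1. \<forall>k\<ge>K1. nsq (\<lambda>\<alpha>. G j \<alpha> - G k \<alpha>) < 1" using cauchy_nsq[of 1] by auto
  have gH: "g \<in> H2"
  proof -
    have "(\<lambda>\<alpha>. G K1 \<alpha> - (G K1 \<alpha> - g \<alpha>)) \<in> H2"
      using H2_diff[OF GH[of K1] conjunct1[OF tail[OF K1 order_refl]]] .
    thus ?thesis by simp
  qed
  have conv: "(\<lambda>k. h2_norm (\<lambda>\<alpha>. G k \<alpha> - g \<alpha>)) \<longlonglongrightarrow> 0"
  proof (rule LIMSEQ_I)
    fix r :: real assume r: "r > 0"
    obtain K where K: "\<forall>j\<ge>K. \<forall>k\<ge>K. nsq (\<lambda>\<alpha>. G j \<alpha> - G k \<alpha>) < r\<^sup>2 / 2"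
      using cauchy_nsq[of "r\<^sup>2/2"] r by auto
    have "norm (h2_norm (\<lambda>\<alpha>. G k \<alpha> - g \<alpha>) - 0) < r" if "k \<ge> K" for k
    proof -
      have "nsq (\<lambda>\<alpha>. G k \<alpha> - g \<alpha>) \<le> r\<^sup>2 / 2" using tail[OF K that] by blast
      moreover have "r\<^sup>2 > 0" using r by simp
      ultimately have "nsq (\<lambda>\<alpha>. G k \<alpha> - g \<alpha>) < r\<^sup>2" by linarith
      hence "sqrt (nsq (\<lambda>\<alpha>. G k \<alpha> - g \<alpha>)) < sqrt (r\<^sup>2)" by (rule real_sqrt_less_mono)
      hence "sqrt (nsq (\<lambda>\<alpha>. G k \<alpha> - g \<alpha>)) < r" using r by simp
      thus ?thesis by (simp add: h2_norm_nsq nsq_nonneg)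
    qed
    thus "\<exists>no. \<forall>n\<ge>no. norm (h2_norm (\<lambda>\<alpha>. G n \<alpha> - g \<alpha>) - 0) < r" by blast
  qed
  have gQ: "g \<in> Q" by (rule Qcl[OF _ gH conv]) (use GQ in auto)
  have gmin: "nsq (\<lambda>\<alpha>. x \<alpha> - g \<alpha>) \<le> d"
  proof (rule field_le_epsilon)
    fix e :: real assume e: "e > 0"
    obtain K where K: "inverse (real (Suc K)) < e" using reals_Archimedean[of e] e by blast
    have "(\<lambda>\<alpha>. x \<alpha> - g \<alpha>) \<in> H2 \<and> nsq (\<lambda>\<alpha>. x \<alpha> - g \<alpha>) \<le> d + e"
    proof (rule fatou_nsq[where u="\<lambda>k \<alpha>. x \<alpha> - G k \<alpha>"])
      show "(\<lambda>k. x \<alpha> - G k \<alpha>) \<longlonglongrightarrow> x \<alpha> - g \<alpha>" for \<alpha> by (intro tendsto_diff tendsto_const Gg)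
      have "nsq (\<lambda>\<alpha>. x \<alpha> - G k \<alpha>) \<le> d + e" if "k \<ge> K" for k
      proof -
        have "1 / real (Suc k) \<le> 1 / real (Suc K)" using that by (auto intro!: divide_left_mono)
        moreover have "1 / real (Suc K) < e" using K by (simp add: inverse_eq_divide)
        ultimately show ?thesis using Gd[of k] by linarith
      qed
      thus "\<forall>\<^sub>F k in sequentially. (\<lambda>\<alpha>. x \<alpha> - G k \<alpha>) \<in> H2 \<and> nsq (\<lambda>\<alpha>. x \<alpha> - G k \<alpha>) \<le> d + e"
        by (auto simp: eventually_sequentially intro!: exI[of _ K] H2_diff GH x)
    qed
    thus "nsq (\<lambda>\<alpha>. x \<alpha> - g \<alpha>) \<le> d + e" by blast
  qed
  have "h2_inner (\<lambda>\<alpha>. x \<alpha> - g \<alpha>) h = 0" if hQ: "h \<in> Q" for h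
  proof -
    have hH: "h \<in> H2" using hQ QH by auto
    define c where "c = h2_inner (\<lambda>\<alpha>. x \<alpha> - g \<alpha>) h"
    define P where "P = nsq h"
    define s where "s = 1 / (P + 1)"
    define t where "t = complex_of_real s * c"
    have P0: "P \<ge> 0" unfolding P_def by (rule nsq_nonneg)
    have s0: "s > 0" using P0 by (simp add: s_def)
    have sP: "s * P < 1" using P0 by (simp add: s_def field_simps)
    have "(\<lambda>\<alpha>. g \<alpha> + t * h \<alpha>) \<in> Q" by (intro Qadd Qsc gQ hQ)
    hence "d \<le> nsq (\<lambda>\<alpha>. x \<alpha> - (g \<alpha> + t * h \<alpha>))" by (rule d_le)
    also have "(\<lambda>\<alpha>. x \<alpha> - (g \<alpha> + t * h \<alpha>)) = (\<lambda>\<alpha>. (x \<alpha> - g \<alpha>) - t * h \<alpha>)" by (auto simp: algebra_simps)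
    also have "nsq \<dots> = nsq (\<lambda>\<alpha>. x \<alpha> - g \<alpha>) - 2 * Re (cnj t * c) + (cmod t)\<^sup>2 * P"
      unfolding c_def P_def by (rule nsq_expand) (auto intro: H2_diff x gH hH)
    also have "cnj t * c = complex_of_real (s * (cmod c)\<^sup>2)"
    proof -
      have "cnj t * c = complex_of_real s * (c * cnj c)" unfolding t_def by (simp add: mult_ac)
      also have "c * cnj c = complex_of_real ((cmod c)\<^sup>2)" by (rule complex_norm_square[symmetric])
      finally show ?thesis by (simp only: of_real_mult)
    qed
    also have "(cmod t)\<^sup>2 = s\<^sup>2 * (cmod c)\<^sup>2"
      unfolding t_def using s0 by (simp add: norm_mult power_mult_distrib)
    finally have "d \<le> nsq (\<lambda>\<alpha>. x \<alpha> - g \<alpha>) - 2 * (s * (cmod c)\<^sup>2) + s\<^sup>2 * (cmod c)\<^sup>2 * P"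
      by simp
    with gmin have "s * (cmod c)\<^sup>2 * (2 - s * P) \<le> 0" by (simp add: algebra_simps power2_eq_square)
    moreover have "s * (cmod c)\<^sup>2 * (2 - s * P) \<ge> 0" using s0 sP by simp
    ultimately have "s * (cmod c)\<^sup>2 * (2 - s * P) = 0" by linarith
    hence "c = 0" using s0 sP by simp
    thus ?thesis by (simp add: c_def)
  qed
  thus ?thesis using gQ by blast
qed

lemma proj_unique:
  assumes Q: "closed_subspace Q" and x: "x \<in> H2" and g1: "g1 \<in> Q" and g2: "g2 \<in> Q"
    and o1: "\<forall>h\<in>Q. h2_inner (\<lambda>\<alpha>. x \<alpha> - g1 \<alpha>) h = 0"
    and o2: "\<forall>h\<in>Q. h2_inner (\<lambda>\<alpha>. x \<alpha> - g2 \<alpha>) h = 0"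
  shows "g1 = g2"
proof -
  have QH: "Q \<subseteq> H2" using cs_H2[OF Q] .
  define h where "h = (\<lambda>\<alpha>. g1 \<alpha> - g2 \<alpha>)"
  have hQ: "h \<in> Q" unfolding h_def by (rule closed_subspace_diff[OF Q g1 g2])
  have hH: "h \<in> H2" using hQ QH by auto
  have g1H: "g1 \<in> H2" and g2H: "g2 \<in> H2" using g1 g2 QH by auto
  have "h2_inner (\<lambda>\<alpha>. (x \<alpha> - g2 \<alpha>) - (x \<alpha> - g1 \<alpha>)) h = h2_inner (\<lambda>\<alpha>. x \<alpha> - g2 \<alpha>) h - h2_inner (\<lambda>\<alpha>. x \<alpha> - g1 \<alpha>) h"
    by (rule h2_inner_diff_left[OF H2_diff[OF x g2H] H2_diff[OF x g1H] hH])
  also have "\<dots> = 0" using o1 o2 hQ by simp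
  also have "(\<lambda>\<alpha>. (x \<alpha> - g2 \<alpha>) - (x \<alpha> - g1 \<alpha>)) = h" by (auto simp: h_def)
  finally have "h2_inner h h = 0" .
  hence n0: "nsq h = 0" using h2_inner_self[OF hH] by simp
  have "h \<alpha> = 0" for \<alpha> using coeff_le_nsq[OF hH, of \<alpha>] n0 by simp
  thus ?thesis by (auto simp: h_def fun_eq_iff)
qed

lemma proj_eq:
  assumes Q: "closed_subspace Q" and x: "x \<in> H2" and g: "g \<in> Q"
    and o: "\<forall>h\<in>Q. h2_inner (\<lambda>\<alpha>. x \<alpha> - g \<alpha>) h = 0"
  shows "proj Q x = g"
  unfolding proj_def
proof (rule the_equality)
  show "g \<in> Q \<and> (\<forall>h\<in>Q. h2_inner (\<lambda>\<alpha>. x \<alpha> - g \<alpha>) h = 0)" using g o by blast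
  fix g' assume "g' \<in> Q \<and> (\<forall>h\<in>Q. h2_inner (\<lambda>\<alpha>. x \<alpha> - g' \<alpha>) h = 0)"
  thus "g' = g" using proj_unique[OF Q x _ g _ o] by blast
qed

lemma proj_prop:
  assumes Q: "closed_subspace Q" and x: "x \<in> H2"
  shows "proj Q x \<in> Q \<and> (\<forall>h\<in>Q. h2_inner (\<lambda>\<alpha>. x \<alpha> - proj Q x \<alpha>) h = 0)"
proof -
  obtain g where "g \<in> Q" "\<forall>h\<in>Q. h2_inner (\<lambda>\<alpha>. x \<alpha> - g \<alpha>) h = 0" using proj_exists[OF Q x] by blast
  moreover have "proj Q x = g" by (rule proj_eq[OF Q x]) fact+
  ultimately show ?thesis by simp
qed



definition sadj :: "('n::finite \<Rightarrow> nat) \<Rightarrow> 'n coeffs \<Rightarrow> 'n coeffs" where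
  "sadj \<gamma> h = (\<lambda>\<alpha>. h (\<lambda>i. \<alpha> i + \<gamma> i))"

definition sh :: "('n::finite \<Rightarrow> nat) \<Rightarrow> 'n coeffs \<Rightarrow> 'n coeffs" where
  "sh \<gamma> \<psi> = (\<lambda>\<alpha>. if \<gamma> \<le> \<alpha> then \<psi> (\<lambda>i. \<alpha> i - \<gamma> i) else 0)"

lemma sadj_Q:
  assumes qm: "quotient_module Q" and h: "h \<in> Q"
  shows "sadj \<gamma> h \<in> Q"
proof (induction "sum \<gamma> UNIV" arbitrary: \<gamma> rule: less_induct)
  case less
  show ?case
  proof (cases "\<gamma> = (\<lambda>i. 0)")
    case True
    thus ?thesis using h by (simp add: sadj_def)
  next
    case False
    then obtain i where i: "\<gamma> i > 0" by (auto simp: fun_eq_iff)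
    define \<gamma>' where "\<gamma>' = \<gamma>(i := \<gamma> i - 1)"
    have s1: "sum \<gamma> UNIV = \<gamma> i + sum \<gamma> (UNIV - {i})" by (simp add: sum.remove)
    have s2: "sum \<gamma>' UNIV = \<gamma>' i + sum \<gamma>' (UNIV - {i})" by (simp add: sum.remove)
    have s3: "sum \<gamma>' (UNIV - {i}) = sum \<gamma> (UNIV - {i})" by (rule sum.cong) (auto simp: \<gamma>'_def)
    have "sum \<gamma>' UNIV < sum \<gamma> UNIV" using s1 s2 s3 i by (simp add: \<gamma>'_def)
    hence IH: "sadj \<gamma>' h \<in> Q" by (rule less.hyps)
    have "sadj \<gamma> h = Tz_adj i (sadj \<gamma>' h)"
    proof (rule ext)
      fix \<alpha>
      have "(\<lambda>j. \<alpha> j + \<gamma> j) = (\<lambda>j. (\<alpha>(i := Suc (\<alpha> i))) j + \<gamma>' j)"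
        using i by (auto simp: \<gamma>'_def fun_eq_iff)
      thus "sadj \<gamma> h \<alpha> = Tz_adj i (sadj \<gamma>' h) \<alpha>" by (simp add: sadj_def Tz_adj_def)
    qed
    moreover have "Tz_adj i (sadj \<gamma>' h) \<in> Q" using qm IH unfolding quotient_module_def by blast
    ultimately show ?thesis by simp
  qed
qed

lemma shift_image: "range (\<lambda>\<beta>. (\<lambda>i. \<beta> i + \<gamma> i)) = {\<alpha>::'n::finite \<Rightarrow> nat. \<gamma> \<le> \<alpha>}"
proof (intro set_eqI iffI)
  fix \<alpha> assume "\<alpha> \<in> range (\<lambda>\<beta>. (\<lambda>i. \<beta> i + \<gamma> i))"
  thus "\<alpha> \<in> {\<alpha>. \<gamma> \<le> \<alpha>}" by (auto simp: le_fun_def)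
next
  fix \<alpha> assume "\<alpha> \<in> {\<alpha>. \<gamma> \<le> \<alpha>}"
  hence e: "\<alpha> = (\<lambda>i. (\<alpha> i - \<gamma> i) + \<gamma> i)" by (auto simp: le_fun_def fun_eq_iff)
  show "\<alpha> \<in> range (\<lambda>\<beta>. (\<lambda>i. \<beta> i + \<gamma> i))" by (subst e) (rule rangeI)
qed

lemma shift_inj: "inj (\<lambda>\<beta>::'n::finite \<Rightarrow> nat. (\<lambda>i. \<beta> i + \<gamma> i))"
  by (auto simp: inj_def fun_eq_iff)

lemma shift_infsum:
  fixes G :: "('n::finite \<Rightarrow> nat) \<Rightarrow> 'a::{comm_monoid_add,t2_space}"
  shows "infsum (\<lambda>\<alpha>. if \<gamma> \<le> \<alpha> then G \<alpha> else 0) UNIV = infsum (\<lambda>\<beta>. G (\<lambda>i. \<beta> i + \<gamma> i)) UNIV"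
proof -
  have "infsum (\<lambda>\<alpha>. if \<gamma> \<le> \<alpha> then G \<alpha> else 0) UNIV = infsum G {\<alpha>. \<gamma> \<le> \<alpha>}"
    by (rule infsum_cong_neutral) auto
  also have "\<dots> = infsum G (range (\<lambda>\<beta>. (\<lambda>i. \<beta> i + \<gamma> i)))" by (simp only: shift_image)
  also have "\<dots> = infsum (G \<circ> (\<lambda>\<beta>. (\<lambda>i. \<beta> i + \<gamma> i))) UNIV"
    by (rule infsum_reindex) (rule shift_inj)
  finally show ?thesis by (simp add: o_def)
qed

lemma shift_summable:
  fixes G :: "('n::finite \<Rightarrow> nat) \<Rightarrow> 'a::{comm_monoid_add,topological_space}"
  shows "(\<lambda>\<alpha>. if \<gamma> \<le> \<alpha> then G \<alpha> else 0) summable_on UNIV \<longleftrightarrow> (\<lambda>\<beta>. G (\<lambda>i. \<beta> i + \<gamma> i)) summable_on UNIV"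
proof -
  have "(\<lambda>\<alpha>. if \<gamma> \<le> \<alpha> then G \<alpha> else 0) summable_on UNIV \<longleftrightarrow> G summable_on {\<alpha>. \<gamma> \<le> \<alpha>}"
    by (rule summable_on_cong_neutral) auto
  also have "\<dots> \<longleftrightarrow> G summable_on (range (\<lambda>\<beta>. (\<lambda>i. \<beta> i + \<gamma> i)))" by (simp only: shift_image)
  also have "\<dots> \<longleftrightarrow> (G \<circ> (\<lambda>\<beta>. (\<lambda>i. \<beta> i + \<gamma> i))) summable_on UNIV"
    by (rule summable_on_reindex) (rule shift_inj)
  finally show ?thesis by (simp add: o_def)
qed

lemma sh_H2: assumes "\<psi> \<in> H2" shows "sh \<gamma> \<psi> \<in> H2"
proof -
  have "(\<lambda>\<alpha>. if \<gamma> \<le> \<alpha> then (cmod (\<psi> (\<lambda>i. \<alpha> i - \<gamma> i)))\<^sup>2 else 0) summable_on UNIV"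
    unfolding shift_summable using assms by (simp add: H2_iff)
  thus ?thesis unfolding H2_iff sh_def
    by (rule summable_on_cong[THEN iffD1, rotated]) auto
qed

lemma sh_inner: "h2_inner (sh \<gamma> \<psi>) h = h2_inner \<psi> (sadj \<gamma> h)"
proof -
  have "h2_inner (sh \<gamma> \<psi>) h = (\<Sum>\<^sub>\<infinity>\<alpha>. if \<gamma> \<le> \<alpha> then \<psi> (\<lambda>i. \<alpha> i - \<gamma> i) * cnj (h \<alpha>) else 0)"
    unfolding h2_inner_def sh_def by (rule infsum_cong) auto
  also have "\<dots> = h2_inner \<psi> (sadj \<gamma> h)"
    unfolding shift_infsum h2_inner_def sadj_def by simp
  finally show ?thesis .
qed

lemma finite_le_set: "finite {\<beta>::'n::finite \<Rightarrow> nat. \<beta> \<le> \<alpha>}"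
proof (rule finite_subset)
  show "{\<beta>. \<beta> \<le> \<alpha>} \<subseteq> PiE UNIV (\<lambda>i. {..\<alpha> i})" by (auto simp: le_fun_def)
  show "finite (PiE UNIV (\<lambda>i. {..\<alpha> i}))" by (rule finite_PiE) auto
qed

lemma mult_flip: "mult \<psi> q \<alpha> = (\<Sum>\<gamma>\<in>{\<gamma>. \<gamma> \<le> \<alpha>}. q \<gamma> * \<psi> (\<lambda>i. \<alpha> i - \<gamma> i))"
  unfolding mult_def
proof (rule sum.reindex_bij_witness[where i="\<lambda>\<gamma>. (\<lambda>i. \<alpha> i - \<gamma> i)" and j="\<lambda>\<gamma>. (\<lambda>i. \<alpha> i - \<gamma> i)"])
  fix a assume "a \<in> {\<gamma>. \<gamma> \<le> \<alpha>}"
  thus "(\<lambda>i. \<alpha> i - (\<alpha> i - a i)) = a" "(\<lambda>i. \<alpha> i - a i) \<in> {\<beta>. \<beta> \<le> \<alpha>}"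
    by (auto simp: le_fun_def fun_eq_iff)
next
  fix b assume "b \<in> {\<beta>. \<beta> \<le> \<alpha>}"
  thus "(\<lambda>i. \<alpha> i - (\<alpha> i - b i)) = b" "(\<lambda>i. \<alpha> i - b i) \<in> {\<gamma>. \<gamma> \<le> \<alpha>}"
    by (auto simp: le_fun_def fun_eq_iff)
  have "(\<lambda>i. \<alpha> i - (\<alpha> i - b i)) = b" using \<open>b \<in> _\<close> by (auto simp: le_fun_def fun_eq_iff)
  thus "q (\<lambda>i. \<alpha> i - b i) * \<psi> (\<lambda>i. \<alpha> i - (\<alpha> i - b i)) = \<psi> b * q (\<lambda>i. \<alpha> i - b i)"
    by (simp add: mult.commute)
qed

lemma mult_shift_form:
  assumes C: "finite C" and q: "\<And>\<gamma>. \<gamma> \<notin> C \<Longrightarrow> q \<gamma> = 0"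
  shows "mult \<psi> q \<alpha> = (\<Sum>\<gamma>\<in>C. q \<gamma> * sh \<gamma> \<psi> \<alpha>)"
proof -
  have "mult \<psi> q \<alpha> = (\<Sum>\<gamma>\<in>{\<gamma>. \<gamma> \<le> \<alpha>}. q \<gamma> * \<psi> (\<lambda>i. \<alpha> i - \<gamma> i))" by (rule mult_flip)
  also have "\<dots> = (\<Sum>\<gamma>\<in>{\<gamma>. \<gamma> \<le> \<alpha>} \<inter> C. q \<gamma> * \<psi> (\<lambda>i. \<alpha> i - \<gamma> i))"
    by (rule sum.mono_neutral_right) (use q finite_le_set in auto)
  also have "\<dots> = (\<Sum>\<gamma>\<in>C. if \<gamma> \<in> {\<gamma>. \<gamma> \<le> \<alpha>} then q \<gamma> * \<psi> (\<lambda>i. \<alpha> i - \<gamma> i) else 0)"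
    by (subst Int_commute, rule sum.inter_restrict[OF C])
  also have "\<dots> = (\<Sum>\<gamma>\<in>C. q \<gamma> * sh \<gamma> \<psi> \<alpha>)"
    by (rule sum.cong) (auto simp: sh_def)
  finally show ?thesis .
qed

lemma mult_one: "mult one f = f"
proof
  fix \<alpha>
  have "mult one f \<alpha> = (\<Sum>\<beta>\<in>{\<beta>. \<beta> \<le> \<alpha>}. if \<beta> = (\<lambda>i. 0) then f \<alpha> else 0)"
    unfolding mult_def one_def by (rule sum.cong) auto
  also have "\<dots> = (if (\<lambda>i. 0) \<in> {\<beta>. \<beta> \<le> \<alpha>} then f \<alpha> else 0)"
    by (rule sum.delta[OF finite_le_set])
  also have "\<dots> = f \<alpha>" by (simp add: le_fun_def)
  finally show "mult one f \<alpha> = f \<alpha>" .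
qed

lemma mult_diff_left: "mult (\<lambda>\<alpha>. a \<alpha> - b \<alpha>) f = (\<lambda>\<alpha>. mult a f \<alpha> - mult b f \<alpha>)"
  by (simp add: mult_def sum_subtractf left_diff_distrib fun_eq_iff)

lemma mult_diff_right: "mult \<psi> (\<lambda>\<alpha>. a \<alpha> - b \<alpha>) = (\<lambda>\<alpha>. mult \<psi> a \<alpha> - mult \<psi> b \<alpha>)"
  by (simp add: mult_def sum_subtractf right_diff_distrib fun_eq_iff)

lemma mult_local:
  assumes "\<And>\<beta>. \<beta> \<le> \<alpha> \<Longrightarrow> f \<beta> = g \<beta>"
  shows "mult \<psi> f \<alpha> = mult \<psi> g \<alpha>"
  unfolding mult_def
  by (rule sum.cong) (auto intro!: arg_cong[where f="\<lambda>x. _ * x"] assms simp: le_fun_def)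

lemma mult_local_left:
  assumes "\<And>\<beta>. \<beta> \<le> \<alpha> \<Longrightarrow> f \<beta> = g \<beta>"
  shows "mult f \<psi> \<alpha> = mult g \<psi> \<alpha>"
  unfolding mult_def
  by (rule sum.cong) (auto simp: assms)



definition mbox :: "nat \<Rightarrow> ('n::finite \<Rightarrow> nat) set" where
  "mbox N = {\<alpha>. \<forall>i. \<alpha> i < N}"

lemma box_PiE: "mbox N = PiE UNIV (\<lambda>_. {..<N})"
  by (auto simp: mbox_def PiE_UNIV_domain Pi_def)

lemma finite_box: "finite (mbox N)"
  unfolding box_PiE by (rule finite_PiE) auto

lemma box_mono: "L \<le> N \<Longrightarrow> mbox L \<subseteq> mbox N"
  by (auto simp: mbox_def intro: less_le_trans)

lemma finite_in_box: "finite F \<Longrightarrow> \<exists>L. F \<subseteq> mbox L"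
proof (induction F rule: finite_induct)
  case empty thus ?case by auto
next
  case (insert \<alpha> F)
  then obtain L where L: "F \<subseteq> mbox L" by auto
  define L' where "L' = max L (Suc (Max (range \<alpha>)))"
  have "\<alpha> i < L'" for i
  proof -
    have "\<alpha> i \<le> Max (range \<alpha>)" by (rule Max_ge) auto
    hence "\<alpha> i < Suc (Max (range \<alpha>))" by (rule le_imp_less_Suc)
    thus ?thesis unfolding L'_def by (rule less_le_trans) simp
  qed
  hence "\<alpha> \<in> mbox L'" by (simp add: mbox_def)
  moreover have "F \<subseteq> mbox L'" using L box_mono[of L L'] by (auto simp: L'_def)
  ultimately show ?case by auto
qed

definition mon :: "('n::finite \<Rightarrow> complex) \<Rightarrow> ('n \<Rightarrow> nat) \<Rightarrow> complex" where
  "mon z \<alpha> = (\<Prod>i\<in>UNIV. z i ^ \<alpha> i)"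

definition Rr :: "real \<Rightarrow> ('n::finite \<Rightarrow> nat) \<Rightarrow> real" where
  "Rr r \<alpha> = (\<Prod>i\<in>UNIV. r ^ \<alpha> i)"

lemma mon_add: "mon z (\<lambda>i. \<beta> i + \<gamma> i) = mon z \<beta> * mon z \<gamma>"
  by (simp add: mon_def power_add prod.distrib)

lemma norm_mon: "cmod (mon z \<alpha>) = (\<Prod>i\<in>UNIV. cmod (z i) ^ \<alpha> i)"
  by (simp add: mon_def prod_norm[symmetric] norm_power)

lemma Rr_nonneg: "r \<ge> 0 \<Longrightarrow> Rr r \<alpha> \<ge> 0"
  by (simp add: Rr_def prod_nonneg)

lemma Rr_le1: "0 \<le> r \<Longrightarrow> r \<le> 1 \<Longrightarrow> Rr r \<alpha> \<le> 1"
  unfolding Rr_def by (rule prod_le_1) (auto simp: power_le_one)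

lemma sum_box_prod:
  fixes F :: "'n::finite \<Rightarrow> nat \<Rightarrow> 'a::comm_semiring_1"
  shows "(\<Sum>k\<in>mbox N. \<Prod>i\<in>UNIV. F i (k i)) = (\<Prod>i\<in>(UNIV::'n::finite set). \<Sum>j<N. F i j)"
  unfolding box_PiE using prod_sum_PiE[of UNIV "\<lambda>_. {..<N}" F] by simp

lemma geom_bound: fixes r :: real assumes "0 \<le> r" "r < 1" shows "(\<Sum>j<L. r ^ j) \<le> 1 / (1 - r)"
proof -
  have "(\<Sum>j<L. r ^ j) = (1 - r ^ L) / (1 - r)"
    using assms sum_gp_strict[of r L] by (simp add: field_simps)
  also have "\<dots> \<le> 1 / (1 - r)" using assms by (intro divide_right_mono) auto
  finally show ?thesis .
qed

lemma Rr_sum_bound: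
  fixes F :: "('n::finite \<Rightarrow> nat) set"
  assumes "0 \<le> r" "r < 1" "finite F"
  shows "sum (Rr r) F \<le> (1 / (1 - r)) ^ CARD('n)"
proof -
  obtain LL where LL: "F \<subseteq> mbox LL" using finite_in_box assms(3) by blast
  have "sum (Rr r) F \<le> sum (Rr r) (mbox LL :: ('n \<Rightarrow> nat) set)"
    by (rule sum_mono2[OF finite_box LL]) (rule Rr_nonneg[OF assms(1)])
  also have "\<dots> = (\<Prod>i\<in>(UNIV::'n set). \<Sum>j<LL. r ^ j)"
    unfolding Rr_def by (rule sum_box_prod)
  also have "\<dots> \<le> (\<Prod>i\<in>(UNIV::'n set). 1 / (1 - r))"
    by (rule prod_mono) (use geom_bound[OF assms(1,2)] assms in \<open>auto intro: sum_nonneg\<close>)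
  also have "\<dots> = (1 / (1 - r)) ^ CARD('n)" by simp
  finally show ?thesis .
qed

lemma Rr_summable: assumes "0 \<le> r" "r < 1" shows "(Rr r :: ('n::finite \<Rightarrow> nat) \<Rightarrow> real) summable_on UNIV"
proof (rule nonneg_bdd_above_summable_on)
  show "Rr r x \<ge> 0" if "x \<in> UNIV" for x by (rule Rr_nonneg[OF assms(1)])
  show "bdd_above (sum (Rr r) ` {F. F \<subseteq> (UNIV :: ('n \<Rightarrow> nat) set) \<and> finite F})"
    by (rule bdd_aboveI2[where M="(1 / (1 - r)) ^ CARD('n)"]) (use Rr_sum_bound assms in auto)
qed



definition om :: "nat \<Rightarrow> complex" where
  "om N = exp (2 * of_real pi * \<i> / of_nat N)"

lemma om_pow: "om N ^ j = exp (2 * of_real pi * \<i> * of_nat j / of_nat N)"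
proof -
  have "om N ^ j = exp (of_nat j * (2 * of_real pi * \<i> / of_nat N))"
    unfolding om_def by (rule exp_of_nat_mult[symmetric])
  thus ?thesis by (simp add: field_simps)
qed

lemma om_pow_eq_1: "N \<ge> 1 \<Longrightarrow> om N ^ j = 1 \<longleftrightarrow> N dvd j"
  unfolding om_pow by (rule complex_root_unity_eq_1)

lemma norm_om: "cmod (om N) = 1"
  unfolding om_def by (simp add: norm_exp_eq_Re)

lemma cnj_mult_self: "cmod w = 1 \<Longrightarrow> cnj w * w = 1"
  using complex_norm_square[of w] by (simp add: mult.commute)

lemma orth1:
  assumes N: "N \<ge> 1" and a: "a < N" and b: "b < N"
  shows "(\<Sum>j<N. om N ^ (j * a) * cnj (om N ^ (j * b))) = (if a = b then of_nat N else 0)"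
proof -
  define w where "w = om N"
  have w1: "cmod w = 1" by (simp add: w_def norm_om)
  have cw: "cnj (w ^ m) * w ^ m = 1" for m
    by (rule cnj_mult_self) (simp add: norm_power w1)
  have w0: "w \<noteq> 0" using w1 by auto
  have wne: "w ^ m \<noteq> 0" for m using w1 by auto
  define q where "q = w ^ a * cnj (w ^ b)"
  have trm: "w ^ (j * a) * cnj (w ^ (j * b)) = q ^ j" for j
    unfolding q_def power_mult_distrib by (simp add: mult.commute[of j] power_mult)
  show ?thesis
  proof (cases "a = b")
    case True
    have "q = 1" unfolding q_def True using cw[of b] by (simp add: mult.commute)
    have "(\<Sum>j<N. om N ^ (j * a) * cnj (om N ^ (j * b))) = (\<Sum>j<N. q ^ j)"
      by (simp only: w_def[symmetric] trm)
    thus ?thesis using True \<open>q = 1\<close> by simp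
  next
    case False
    have q1: "q \<noteq> 1"
    proof
      assume "q = 1"
      hence "w ^ a = w ^ b"
        using cw[of b] unfolding q_def by (metis mult.assoc mult.right_neutral mult_1)
      show False
      proof (cases "a < b")
        case True
        have "w ^ b = w ^ a * w ^ (b - a)" using True by (simp flip: power_add)
        hence "w ^ (b - a) = 1" using \<open>w ^ a = w ^ b\<close> wne[of a] w0 by simp
        hence "N dvd (b - a)" using om_pow_eq_1[OF N] by (simp add: w_def)
        moreover have "0 < b - a" "b - a < N" using True b by auto
        ultimately show False by (simp add: nat_dvd_not_less)
      next
        case False
        hence lt: "b < a" using \<open>a \<noteq> b\<close> by simp
        have "w ^ a = w ^ b * w ^ (a - b)" using lt by (simp flip: power_add)
        hence "w ^ (a - b) = 1" using \<open>w ^ a = w ^ b\<close> wne[of b] w0 by simp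
        hence "N dvd (a - b)" using om_pow_eq_1[OF N] by (simp add: w_def)
        moreover have "0 < a - b" "a - b < N" using lt a by auto
        ultimately show False by (simp add: nat_dvd_not_less)
      qed
    qed
    have wN: "w ^ N = 1" using om_pow_eq_1[OF N, of N] by (simp add: w_def)
    have qN: "q ^ N = 1"
    proof -
      have "q ^ N = (w ^ N) ^ a * cnj ((w ^ N) ^ b)"
        unfolding q_def power_mult_distrib by (simp flip: power_mult add: mult.commute)
      thus ?thesis using wN by simp
    qed
    have "(\<Sum>j<N. om N ^ (j * a) * cnj (om N ^ (j * b))) = (\<Sum>j<N. q ^ j)"
      by (simp only: w_def[symmetric] trm)
    also have "\<dots> = (q ^ N - 1) / (q - 1)" by (rule geometric_sum[OF q1])
    also have "\<dots> = 0" using qN by simp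
    finally show ?thesis using False by simp
  qed
qed



definition Ek :: "nat \<Rightarrow> ('n::finite \<Rightarrow> nat) \<Rightarrow> ('n \<Rightarrow> nat) \<Rightarrow> complex" where
  "Ek N k \<alpha> = (\<Prod>i\<in>UNIV. om N ^ (k i * \<alpha> i))"

lemma orthE:
  fixes \<alpha> \<beta> :: "'n::finite \<Rightarrow> nat"
  assumes N: "N \<ge> 1" and \<alpha>: "\<alpha> \<in> mbox N" and \<beta>: "\<beta> \<in> mbox N"
  shows "(\<Sum>k\<in>mbox N. Ek N k \<alpha> * cnj (Ek N k \<beta>)) = (if \<alpha> = \<beta> then of_nat N ^ CARD('n) else 0)"
proof -
  have "(\<Sum>k\<in>mbox N. Ek N k \<alpha> * cnj (Ek N k \<beta>))
      = (\<Sum>k\<in>(mbox N :: ('n \<Rightarrow> nat) set). \<Prod>i\<in>UNIV. om N ^ (k i * \<alpha> i) * cnj (om N ^ (k i * \<beta> i)))"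
    unfolding Ek_def cnj_prod prod.distrib ..
  also have "\<dots> = (\<Prod>i\<in>(UNIV::'n set). \<Sum>j<N. om N ^ (j * \<alpha> i) * cnj (om N ^ (j * \<beta> i)))"
    by (rule sum_box_prod)
  also have "\<dots> = (\<Prod>i\<in>(UNIV::'n set). if \<alpha> i = \<beta> i then of_nat N else 0)"
    by (rule prod.cong[OF refl], rule orth1[OF N]) (use \<alpha> \<beta> in \<open>auto simp: mbox_def\<close>)
  also have "\<dots> = (if \<alpha> = \<beta> then of_nat N ^ CARD('n) else 0)"
  proof (cases "\<alpha> = \<beta>")
    case True thus ?thesis by simp
  next
    case False
    then obtain i where "\<alpha> i \<noteq> \<beta> i" by (auto simp: fun_eq_iff)
    thus ?thesis using False by (auto simp: prod_zero_iff)
  qed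
  finally show ?thesis .
qed

lemma mon_grid: "mon (\<lambda>i. complex_of_real r * om N ^ k i) \<alpha> = complex_of_real (Rr r \<alpha>) * Ek N k \<alpha>"
  unfolding mon_def Rr_def Ek_def by (simp add: power_mult_distrib prod.distrib power_mult)

lemma parseval:
  fixes g :: "('n::finite \<Rightarrow> nat) \<Rightarrow> complex"
  assumes N: "N \<ge> 1"
  shows "(\<Sum>k\<in>mbox N. (cmod (\<Sum>\<alpha>\<in>mbox N. g \<alpha> * mon (\<lambda>i. complex_of_real r * om N ^ k i) \<alpha>))\<^sup>2)
       = real N ^ CARD('n) * (\<Sum>\<alpha>\<in>mbox N. (cmod (g \<alpha>))\<^sup>2 * (Rr r \<alpha>)\<^sup>2)"
proof -
  define C where "C = (of_nat N ^ CARD('n) :: complex)"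
  define a where "a \<alpha> = g \<alpha> * complex_of_real (Rr r \<alpha>)" for \<alpha>
  define S where "S k = (\<Sum>\<alpha>\<in>(mbox N :: ('n \<Rightarrow> nat) set). a \<alpha> * Ek N k \<alpha>)" for k
  have S_eq: "(\<Sum>\<alpha>\<in>mbox N. g \<alpha> * mon (\<lambda>i. complex_of_real r * om N ^ k i) \<alpha>) = S k" for k
    unfolding S_def a_def mon_grid by (simp add: mult_ac)
  have "complex_of_real (\<Sum>k\<in>(mbox N :: ('n \<Rightarrow> nat) set). (cmod (S k))\<^sup>2) = (\<Sum>k\<in>mbox N. S k * cnj (S k))"
    unfolding of_real_sum complex_norm_square ..
  also have "\<dots> = (\<Sum>k\<in>mbox N. \<Sum>\<alpha>\<in>mbox N. \<Sum>\<beta>\<in>mbox N. a \<alpha> * cnj (a \<beta>) * (Ek N k \<alpha> * cnj (Ek N k \<beta>)))"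
    unfolding S_def cnj_sum sum_product by (simp add: mult_ac)
  also have "\<dots> = (\<Sum>\<alpha>\<in>mbox N. \<Sum>k\<in>mbox N. \<Sum>\<beta>\<in>mbox N. a \<alpha> * cnj (a \<beta>) * (Ek N k \<alpha> * cnj (Ek N k \<beta>)))"
    by (rule sum.swap)
  also have "\<dots> = (\<Sum>\<alpha>\<in>mbox N. \<Sum>\<beta>\<in>mbox N. \<Sum>k\<in>mbox N. a \<alpha> * cnj (a \<beta>) * (Ek N k \<alpha> * cnj (Ek N k \<beta>)))"
    by (rule sum.cong[OF refl]) (rule sum.swap)
  also have "\<dots> = (\<Sum>\<alpha>\<in>mbox N. \<Sum>\<beta>\<in>mbox N. a \<alpha> * cnj (a \<beta>) * (\<Sum>k\<in>mbox N. Ek N k \<alpha> * cnj (Ek N k \<beta>)))"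
    by (simp add: sum_distrib_left)
  also have "\<dots> = (\<Sum>\<alpha>\<in>mbox N. \<Sum>\<beta>\<in>mbox N. if \<alpha> = \<beta> then a \<alpha> * cnj (a \<alpha>) * C else 0)"
    by (intro sum.cong refl) (simp add: orthE[OF N] C_def)
  also have "\<dots> = (\<Sum>\<alpha>\<in>mbox N. a \<alpha> * cnj (a \<alpha>) * C)"
    by (rule sum.cong[OF refl]) (simp add: finite_box)
  also have "\<dots> = complex_of_real (real N ^ CARD('n) * (\<Sum>\<alpha>\<in>mbox N. (cmod (g \<alpha>))\<^sup>2 * (Rr r \<alpha>)\<^sup>2))"
  proof -
    have "a \<alpha> * cnj (a \<alpha>) = complex_of_real ((cmod (g \<alpha>))\<^sup>2 * (Rr r \<alpha>)\<^sup>2)" for \<alpha>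
    proof -
      have "a \<alpha> * cnj (a \<alpha>) = complex_of_real ((cmod (a \<alpha>))\<^sup>2)" by (rule complex_norm_square[symmetric])
      also have "(cmod (a \<alpha>))\<^sup>2 = (cmod (g \<alpha>))\<^sup>2 * (Rr r \<alpha>)\<^sup>2"
        by (simp add: a_def norm_mult power_mult_distrib)
      finally show ?thesis .
    qed
    thus ?thesis by (simp add: C_def sum_distrib_left sum_distrib_right mult_ac)
  qed
  finally have "complex_of_real (\<Sum>k\<in>(mbox N :: ('n \<Rightarrow> nat) set). (cmod (S k))\<^sup>2)
      = complex_of_real (real N ^ CARD('n) * (\<Sum>\<alpha>\<in>mbox N. (cmod (g \<alpha>))\<^sup>2 * (Rr r \<alpha>)\<^sup>2))" .
  hence "(\<Sum>k\<in>(mbox N :: ('n \<Rightarrow> nat) set). (cmod (S k))\<^sup>2) = real N ^ CARD('n) * (\<Sum>\<alpha>\<in>mbox N. (cmod (g \<alpha>))\<^sup>2 * (Rr r \<alpha>)\<^sup>2)"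
    by (simp only: of_real_eq_iff)
  thus ?thesis by (simp only: S_eq)
qed



lemma cauchy_box:
  fixes a b :: "('n::finite \<Rightarrow> nat) \<Rightarrow> complex"
  assumes a0: "\<And>\<beta>. \<beta> \<notin> mbox L \<Longrightarrow> a \<beta> = 0" and b0: "\<And>\<gamma>. \<gamma> \<notin> mbox L \<Longrightarrow> b \<gamma> = 0"
  shows "(\<Sum>\<beta>\<in>mbox L. a \<beta> * mon z \<beta>) * (\<Sum>\<gamma>\<in>mbox L. b \<gamma> * mon z \<gamma>) = (\<Sum>\<alpha>\<in>mbox (2*L). mult a b \<alpha> * mon z \<alpha>)"
proof -
  have inner: "(\<Sum>\<alpha>\<in>mbox (2*L). sh \<gamma> a \<alpha> * mon z \<alpha>) = mon z \<gamma> * (\<Sum>\<beta>\<in>mbox L. a \<beta> * mon z \<beta>)"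
    if \<gamma>: "\<gamma> \<in> mbox L" for \<gamma>
  proof -
    define T where "T = (\<lambda>\<beta>::'n\<Rightarrow>nat. \<lambda>i. \<beta> i + \<gamma> i)"
    have injT: "inj_on T (mbox L)" by (auto simp: T_def inj_on_def fun_eq_iff)
    have shT: "sh \<gamma> a (T \<beta>) = a \<beta>" for \<beta> by (simp add: sh_def T_def le_fun_def)
    have "(\<Sum>\<beta>\<in>mbox L. a \<beta> * mon z \<beta>) * mon z \<gamma> = (\<Sum>\<beta>\<in>mbox L. sh \<gamma> a (T \<beta>) * mon z (T \<beta>))"
      unfolding shT by (simp add: sum_distrib_right sum_distrib_left T_def mon_add mult_ac)
    also have "\<dots> = (\<Sum>\<alpha>\<in>T ` mbox L. sh \<gamma> a \<alpha> * mon z \<alpha>)"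
      by (simp add: sum.reindex[OF injT])
    also have "\<dots> = (\<Sum>\<alpha>\<in>mbox (2*L). sh \<gamma> a \<alpha> * mon z \<alpha>)"
    proof (rule sum.mono_neutral_left[OF finite_box])
      show "T ` mbox L \<subseteq> mbox (2*L)" using \<gamma> by (auto simp: T_def mbox_def) (metis add_less_mono mult_2)
      show "\<forall>\<alpha>\<in>mbox (2*L) - T ` mbox L. sh \<gamma> a \<alpha> * mon z \<alpha> = 0"
      proof
        fix \<alpha> assume \<alpha>: "\<alpha> \<in> mbox (2*L) - T ` mbox L"
        show "sh \<gamma> a \<alpha> * mon z \<alpha> = 0"
        proof (cases "\<gamma> \<le> \<alpha>")
          case False thus ?thesis by (simp add: sh_def)
        next
          case True
          have "\<alpha> = T (\<lambda>i. \<alpha> i - \<gamma> i)" using True by (auto simp: T_def le_fun_def fun_eq_iff)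
          hence "(\<lambda>i. \<alpha> i - \<gamma> i) \<notin> mbox L" using \<alpha> by (metis DiffD2 imageI)
          thus ?thesis using True a0 by (simp add: sh_def)
        qed
      qed
    qed
    finally show ?thesis by (simp add: mult.commute)
  qed
  have "(\<Sum>\<alpha>\<in>mbox (2*L). mult a b \<alpha> * mon z \<alpha>) = (\<Sum>\<alpha>\<in>mbox (2*L). \<Sum>\<gamma>\<in>mbox L. b \<gamma> * (sh \<gamma> a \<alpha> * mon z \<alpha>))"
    by (simp add: mult_shift_form[OF finite_box b0] sum_distrib_right sum_distrib_left mult_ac)
  also have "\<dots> = (\<Sum>\<gamma>\<in>mbox L. \<Sum>\<alpha>\<in>mbox (2*L). b \<gamma> * (sh \<gamma> a \<alpha> * mon z \<alpha>))"
    by (rule sum.swap)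
  also have "\<dots> = (\<Sum>\<gamma>\<in>mbox L. b \<gamma> * (mon z \<gamma> * (\<Sum>\<beta>\<in>mbox L. a \<beta> * mon z \<beta>)))"
    by (rule sum.cong[OF refl]) (simp add: inner flip: sum_distrib_left)
  also have "\<dots> = (\<Sum>\<beta>\<in>mbox L. a \<beta> * mon z \<beta>) * (\<Sum>\<gamma>\<in>mbox L. b \<gamma> * mon z \<gamma>)"
    by (simp add: sum_distrib_right sum_distrib_left mult_ac)
  finally show ?thesis ..
qed



lemma coeff_bound: assumes "f \<in> H2" shows "cmod (f \<alpha>) \<le> sqrt (nsq f)"
  using coeff_le_nsq[OF assms, of \<alpha>] by (simp add: real_le_rsqrt)

lemma norm_mon_le:
  assumes "\<And>i. cmod (z i) \<le> r"
  shows "cmod (mon z \<alpha>) \<le> Rr r \<alpha>"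
  unfolding norm_mon Rr_def by (rule prod_mono) (use assms in \<open>auto intro: power_mono\<close>)

lemma norm_mon_eq:
  assumes "\<And>i. cmod (z i) = r"
  shows "cmod (mon z \<alpha>) = Rr r \<alpha>"
  unfolding norm_mon Rr_def using assms by simp

lemma eval_abs_summable:
  assumes f: "f \<in> H2" and r: "0 \<le> r" "r < 1" and z: "\<And>i. cmod (z i) \<le> r"
  shows "(\<lambda>\<alpha>. norm (f \<alpha> * mon z \<alpha>)) summable_on UNIV"
proof (rule summable_on_comparison_test)
  show "(\<lambda>\<alpha>. sqrt (nsq f) * Rr r \<alpha>) summable_on UNIV"
    by (intro summable_on_cmult_right Rr_summable r)
  show "norm (f \<alpha> * mon z \<alpha>) \<le> sqrt (nsq f) * Rr r \<alpha>" for \<alpha>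
    unfolding norm_mult by (intro mult_mono coeff_bound f norm_mon_le z) (auto simp: nsq_nonneg)
  show "0 \<le> norm (f \<alpha> * mon z \<alpha>)" for \<alpha> by simp
qed

lemma eval_summable:
  assumes f: "f \<in> H2" and r: "0 \<le> r" "r < 1" and z: "\<And>i. cmod (z i) \<le> r"
  shows "(\<lambda>\<alpha>. f \<alpha> * mon z \<alpha>) summable_on UNIV"
  using abs_summable_summable[OF eval_abs_summable[OF assms]] .

lemma polydisc_radius:
  assumes "z \<in> polydisc"
  shows "\<exists>r. 0 \<le> r \<and> r < 1 \<and> (\<forall>i. cmod (z i) \<le> r)"
proof -
  define r where "r = Max (range (\<lambda>i. cmod (z i)))"
  have "r \<in> range (\<lambda>i. cmod (z i))" unfolding r_def by (rule Max_in) auto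
  then obtain j where j: "r = cmod (z j)" by auto
  have "cmod (z i) \<le> r" for i unfolding r_def by (rule Max_ge) auto
  moreover have "r < 1" using assms j by (simp add: polydisc_def)
  moreover have "0 \<le> r" using j by simp
  ultimately show ?thesis by blast
qed

lemma h2_eval_mon: "h2_eval f z = (\<Sum>\<^sub>\<infinity>\<alpha>. f \<alpha> * mon z \<alpha>)"
  by (simp add: h2_eval_def mon_def)

lemma tail_small:
  fixes t :: "'a \<Rightarrow> real"
  assumes s: "t summable_on UNIV" and e: "\<epsilon> > 0"
  shows "\<exists>A0. finite A0 \<and> (\<forall>A. finite A \<longrightarrow> A0 \<subseteq> A \<longrightarrow> \<bar>infsum t (UNIV - A)\<bar> < \<epsilon>)"
proof -
  have "(sum t \<longlongrightarrow> infsum t UNIV) (finite_subsets_at_top UNIV)"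
    using has_sum_infsum[OF s] unfolding has_sum_def .
  hence "eventually (\<lambda>A. dist (sum t A) (infsum t UNIV) < \<epsilon>) (finite_subsets_at_top UNIV)"
    using e by (rule tendstoD)
  then obtain A0 where A0: "finite A0" "\<And>A. finite A \<Longrightarrow> A0 \<subseteq> A \<Longrightarrow> dist (sum t A) (infsum t UNIV) < \<epsilon>"
    unfolding eventually_finite_subsets_at_top by (metis subset_UNIV)
  have "\<bar>infsum t (UNIV - A)\<bar> < \<epsilon>" if "finite A" "A0 \<subseteq> A" for A
  proof -
    have "infsum t (UNIV - A) = infsum t UNIV - infsum t A"
      by (rule infsum_Diff[OF s]) (use that in auto)
    also have "infsum t A = sum t A" using that by simp
    finally have eq: "infsum t (UNIV - A) = infsum t UNIV - sum t A" .
    moreover have "dist (sum t A) (infsum t UNIV) < \<epsilon>" by (rule A0(2)[OF that])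
    ultimately show ?thesis by (simp add: dist_real_def)
  qed
  thus ?thesis using A0(1) by blast
qed

lemma le_limit_eps:
  fixes L M X :: real
  assumes "\<And>\<epsilon>. \<epsilon> > 0 \<Longrightarrow> L \<le> (M + \<epsilon>)\<^sup>2 * X"
  shows "L \<le> M\<^sup>2 * X"
proof -
  have lim: "((\<lambda>\<epsilon>. (M + \<epsilon>)\<^sup>2 * X) \<longlongrightarrow> (M + 0)\<^sup>2 * X) (at_right 0)"
    by (intro tendsto_intros)
  have ev: "eventually (\<lambda>\<epsilon>. L \<le> (M + \<epsilon>)\<^sup>2 * X) (at_right (0::real))"
    using eventually_at_right_less[of "0::real"] by eventually_elim (rule assms)
  show ?thesis using tendsto_le[OF trivial_limit_at_right_real lim tendsto_const ev] by simp
qed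

lemma finite_downset: "finite B \<Longrightarrow> finite {\<beta>::'n::finite \<Rightarrow> nat. \<exists>\<alpha>\<in>B. \<beta> \<le> \<alpha>}"
proof -
  assume B: "finite B"
  have "{\<beta>::'n \<Rightarrow> nat. \<exists>\<alpha>\<in>B. \<beta> \<le> \<alpha>} = (\<Union>\<alpha>\<in>B. {\<beta>. \<beta> \<le> \<alpha>})" by auto
  moreover have "finite (\<Union>\<alpha>\<in>B. {\<beta>::'n \<Rightarrow> nat. \<beta> \<le> \<alpha>})"
    using B by (intro finite_UN_I) (simp_all add: finite_le_set)
  ultimately show ?thesis by simp
qed



lemma core_bound:
  fixes \<psi> q :: "'n::finite coeffs"
  assumes \<psi>: "\<psi> \<in> H2" and M: "\<And>z. z \<in> polydisc \<Longrightarrow> cmod (h2_eval \<psi> z) \<le> M"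
    and C: "finite C" and q0: "\<And>\<alpha>. \<alpha> \<notin> C \<Longrightarrow> q \<alpha> = 0"
    and B: "finite B" and r: "0 < r" "r < 1" and e: "\<epsilon> > 0"
  shows "(\<Sum>\<alpha>\<in>B. (cmod (mult \<psi> q \<alpha>))\<^sup>2 * (Rr r \<alpha>)\<^sup>2) \<le> (M + \<epsilon>)\<^sup>2 * (\<Sum>\<alpha>\<in>C. (cmod (q \<alpha>))\<^sup>2)"
proof -
  define t where "t \<alpha> = cmod (\<psi> \<alpha>) * Rr r \<alpha>" for \<alpha>
  have ts: "t summable_on UNIV"
  proof (rule summable_on_comparison_test)
    show "(\<lambda>\<alpha>. sqrt (nsq \<psi>) * Rr r \<alpha>) summable_on UNIV"
      by (intro summable_on_cmult_right Rr_summable) (use r in auto)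
    show "t \<alpha> \<le> sqrt (nsq \<psi>) * Rr r \<alpha>" for \<alpha>
      unfolding t_def by (intro mult_right_mono coeff_bound \<psi> Rr_nonneg) (use r in auto)
    show "0 \<le> t \<alpha>" for \<alpha> unfolding t_def using Rr_nonneg[of r \<alpha>] r by simp
  qed
  obtain A0 where A0: "finite A0" "\<And>A. finite A \<Longrightarrow> A0 \<subseteq> A \<Longrightarrow> \<bar>infsum t (UNIV - A)\<bar> < \<epsilon>"
    using tail_small[OF ts e] by blast
  define A where "A = A0 \<union> {\<beta>. \<exists>\<alpha>\<in>B. \<beta> \<le> \<alpha>}"
  have Afin: "finite A" using A0(1) finite_downset[OF B] by (simp add: A_def)
  have tailA: "\<bar>infsum t (UNIV - A)\<bar> < \<epsilon>" by (rule A0(2)[OF Afin]) (simp add: A_def)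
  define \<psi>A where "\<psi>A \<beta> = (if \<beta> \<in> A then \<psi> \<beta> else 0)" for \<beta>
  obtain L0 where L0: "A \<union> C \<union> B \<subseteq> mbox L0" using finite_in_box[of "A \<union> C \<union> B"] Afin C B by auto
  define L where "L = max L0 1"
  define N where "N = 2 * L"
  have N1: "N \<ge> 1" by (simp add: N_def L_def)
  have L0L: "(mbox L0 :: ('n \<Rightarrow> nat) set) \<subseteq> mbox L" by (rule box_mono) (simp add: L_def)
  have AL: "A \<subseteq> mbox L" "C \<subseteq> mbox L" "B \<subseteq> mbox L" using L0 L0L by auto
  have LN: "(mbox L :: ('n \<Rightarrow> nat) set) \<subseteq> mbox N" by (rule box_mono) (simp add: N_def)
  define zk where "zk k = (\<lambda>i. complex_of_real r * om N ^ k i)" for k :: "'n \<Rightarrow> nat"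
  have zk_norm: "cmod (zk k i) = r" for k i using r by (simp add: zk_def norm_mult norm_power norm_om)
  define P1 where "P1 k = (\<Sum>\<beta>\<in>mbox L. \<psi>A \<beta> * mon (zk k) \<beta>)" for k
  define P2 where "P2 k = (\<Sum>\<gamma>\<in>mbox L. q \<gamma> * mon (zk k) \<gamma>)" for k
  define cA where "cA = mult \<psi>A q"
  have P1_bound: "cmod (P1 k) \<le> M + \<epsilon>" for k
  proof -
    define f where "f \<beta> = \<psi> \<beta> * mon (zk k) \<beta>" for \<beta>
    have zr: "cmod (zk k i) \<le> r" for i using zk_norm by simp
    have fs: "f summable_on UNIV" unfolding f_def
      by (rule eval_summable[OF \<psi>, of r]) (use r zr in auto)
    have fas: "(\<lambda>\<beta>. norm (f \<beta>)) summable_on UNIV" unfolding f_def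
      by (rule eval_abs_summable[OF \<psi>, of r]) (use r zr in auto)
    have nf: "norm (f \<beta>) = t \<beta>" for \<beta> by (simp add: f_def t_def norm_mult norm_mon_eq[OF zk_norm])
    have "P1 k = (\<Sum>\<beta>\<in>mbox L. if \<beta> \<in> A then f \<beta> else 0)"
      unfolding P1_def by (rule sum.cong) (auto simp: \<psi>A_def f_def)
    also have "\<dots> = sum f (mbox L \<inter> A)" by (rule sum.inter_restrict[symmetric]) (rule finite_box)
    also have "mbox L \<inter> A = A" using AL by auto
    finally have P1eq: "P1 k = sum f A" .
    have "infsum f (UNIV - A) = infsum f UNIV - infsum f A"
      by (rule infsum_Diff[OF fs]) (use Afin in auto)
    moreover have "h2_eval \<psi> (zk k) = infsum f UNIV" unfolding h2_eval_mon f_def ..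
    moreover have "infsum f A = sum f A" using Afin by simp
    ultimately have "sum f A = h2_eval \<psi> (zk k) - infsum f (UNIV - A)" by simp
    hence "cmod (sum f A) \<le> cmod (h2_eval \<psi> (zk k)) + cmod (infsum f (UNIV - A))"
      by (simp add: norm_triangle_ineq4)
    moreover have "cmod (h2_eval \<psi> (zk k)) \<le> M" using zk_norm r by (intro M) (simp add: polydisc_def)
    moreover have "cmod (infsum f (UNIV - A)) \<le> infsum (\<lambda>\<beta>. norm (f \<beta>)) (UNIV - A)"
      by (rule norm_infsum_bound) (rule summable_on_subset[OF fas], simp)
    moreover have "infsum (\<lambda>\<beta>. norm (f \<beta>)) (UNIV - A) = infsum t (UNIV - A)"
      by (simp add: nf)
    moreover have "infsum t (UNIV - A) < \<epsilon>" using tailA by arith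
    ultimately have "cmod (sum f A) \<le> M + \<epsilon>" by linarith
    thus ?thesis using P1eq by simp
  qed
  have \<psi>A0: "\<psi>A \<beta> = 0" if "\<beta> \<notin> mbox L" for \<beta> using AL that by (auto simp: \<psi>A_def)
  have q0L: "q \<gamma> = 0" if "\<gamma> \<notin> mbox L" for \<gamma> using AL q0 that by auto
  have prod: "P1 k * P2 k = (\<Sum>\<alpha>\<in>mbox N. cA \<alpha> * mon (zk k) \<alpha>)" for k
    unfolding P1_def P2_def cA_def N_def by (rule cauchy_box[OF \<psi>A0 q0L])
  have P2N: "P2 k = (\<Sum>\<alpha>\<in>mbox N. q \<alpha> * mon (zk k) \<alpha>)" for k
    unfolding P2_def by (rule sum.mono_neutral_left[OF finite_box LN]) (use q0L in auto)
  have pars1: "(\<Sum>k\<in>mbox N. (cmod (P1 k * P2 k))\<^sup>2) = real N ^ CARD('n) * (\<Sum>\<alpha>\<in>mbox N. (cmod (cA \<alpha>))\<^sup>2 * (Rr r \<alpha>)\<^sup>2)"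
    unfolding prod zk_def by (rule parseval[OF N1])
  have pars2: "(\<Sum>k\<in>mbox N. (cmod (P2 k))\<^sup>2) = real N ^ CARD('n) * (\<Sum>\<alpha>\<in>mbox N. (cmod (q \<alpha>))\<^sup>2 * (Rr r \<alpha>)\<^sup>2)"
    unfolding P2N zk_def by (rule parseval[OF N1])
  have Me: "0 \<le> M + \<epsilon>" using P1_bound[of "\<lambda>_. 0"] norm_ge_zero[of "P1 (\<lambda>_. 0)"] by linarith
  have "(\<Sum>k\<in>mbox N. (cmod (P1 k * P2 k))\<^sup>2) \<le> (\<Sum>k\<in>mbox N. (M + \<epsilon>)\<^sup>2 * (cmod (P2 k))\<^sup>2)"
  proof (rule sum_mono)
    fix k :: "'n \<Rightarrow> nat"
    have "(cmod (P1 k))\<^sup>2 \<le> (M + \<epsilon>)\<^sup>2" by (rule power_mono[OF P1_bound]) simp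
    thus "(cmod (P1 k * P2 k))\<^sup>2 \<le> (M + \<epsilon>)\<^sup>2 * (cmod (P2 k))\<^sup>2"
      by (simp add: norm_mult power_mult_distrib mult_right_mono)
  qed
  also have "\<dots> = (M + \<epsilon>)\<^sup>2 * (\<Sum>k\<in>mbox N. (cmod (P2 k))\<^sup>2)" by (simp add: sum_distrib_left)
  finally have "real N ^ CARD('n) * (\<Sum>\<alpha>\<in>mbox N. (cmod (cA \<alpha>))\<^sup>2 * (Rr r \<alpha>)\<^sup>2)
      \<le> real N ^ CARD('n) * ((M + \<epsilon>)\<^sup>2 * (\<Sum>\<alpha>\<in>mbox N. (cmod (q \<alpha>))\<^sup>2 * (Rr r \<alpha>)\<^sup>2))"
    unfolding pars1 pars2 by (simp add: mult_ac)
  hence ineq: "(\<Sum>\<alpha>\<in>mbox N. (cmod (cA \<alpha>))\<^sup>2 * (Rr r \<alpha>)\<^sup>2) \<le> (M + \<epsilon>)\<^sup>2 * (\<Sum>\<alpha>\<in>mbox N. (cmod (q \<alpha>))\<^sup>2 * (Rr r \<alpha>)\<^sup>2)"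
    using N1 by (simp add: mult_le_cancel_left_pos)
  have cAeq: "cA \<alpha> = mult \<psi> q \<alpha>" if "\<alpha> \<in> B" for \<alpha>
    unfolding cA_def by (rule mult_local_left) (use that in \<open>auto simp: \<psi>A_def A_def\<close>)
  have "(\<Sum>\<alpha>\<in>B. (cmod (mult \<psi> q \<alpha>))\<^sup>2 * (Rr r \<alpha>)\<^sup>2) = (\<Sum>\<alpha>\<in>B. (cmod (cA \<alpha>))\<^sup>2 * (Rr r \<alpha>)\<^sup>2)"
    by (rule sum.cong[OF refl]) (simp add: cAeq)
  also have "\<dots> \<le> (\<Sum>\<alpha>\<in>mbox N. (cmod (cA \<alpha>))\<^sup>2 * (Rr r \<alpha>)\<^sup>2)"
    by (rule sum_mono2[OF finite_box]) (use AL LN in auto)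
  also have "\<dots> \<le> (M + \<epsilon>)\<^sup>2 * (\<Sum>\<alpha>\<in>mbox N. (cmod (q \<alpha>))\<^sup>2 * (Rr r \<alpha>)\<^sup>2)" by (rule ineq)
  also have "\<dots> \<le> (M + \<epsilon>)\<^sup>2 * (\<Sum>\<alpha>\<in>C. (cmod (q \<alpha>))\<^sup>2)"
  proof (rule mult_left_mono)
    have "(\<Sum>\<alpha>\<in>mbox N. (cmod (q \<alpha>))\<^sup>2 * (Rr r \<alpha>)\<^sup>2) \<le> (\<Sum>\<alpha>\<in>mbox N. (cmod (q \<alpha>))\<^sup>2)"
    proof (rule sum_mono)
      fix \<alpha> :: "'n \<Rightarrow> nat"
      have "(Rr r \<alpha>)\<^sup>2 \<le> 1" using Rr_le1[of r \<alpha>] Rr_nonneg[of r \<alpha>] r by (simp add: power_le_one)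
      thus "(cmod (q \<alpha>))\<^sup>2 * (Rr r \<alpha>)\<^sup>2 \<le> (cmod (q \<alpha>))\<^sup>2" by (simp add: mult_left_le)
    qed
    also have "\<dots> = (\<Sum>\<alpha>\<in>C. (cmod (q \<alpha>))\<^sup>2)"
      by (rule sum.mono_neutral_right[OF finite_box]) (use AL LN q0 in auto)
    finally show "(\<Sum>\<alpha>\<in>mbox N. (cmod (q \<alpha>))\<^sup>2 * (Rr r \<alpha>)\<^sup>2) \<le> (\<Sum>\<alpha>\<in>C. (cmod (q \<alpha>))\<^sup>2)" .
  qed simp
  finally show ?thesis .
qed



lemma H2_from_finite_bound:
  assumes "\<And>B. finite B \<Longrightarrow> (\<Sum>\<alpha>\<in>B. (cmod (u \<alpha>))\<^sup>2) \<le> K"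
  shows "u \<in> H2 \<and> nsq u \<le> K"
proof -
  have sv: "(\<lambda>\<alpha>. (cmod (u \<alpha>))\<^sup>2) summable_on UNIV"
    by (rule nonneg_bdd_above_summable_on) (auto intro!: bdd_aboveI2 assms)
  moreover have "nsq u \<le> K"
    unfolding nsq_def by (rule infsum_le_finite_sums[OF sv]) (rule assms)
  ultimately show ?thesis by (simp add: H2_iff)
qed

lemma mult_bound_fin:
  fixes \<psi> q :: "'n::finite coeffs"
  assumes \<psi>: "\<psi> \<in> H2" and M: "\<And>z. z \<in> polydisc \<Longrightarrow> cmod (h2_eval \<psi> z) \<le> M"
    and C: "finite C" and q0: "\<And>\<alpha>. \<alpha> \<notin> C \<Longrightarrow> q \<alpha> = 0"
  shows "mult \<psi> q \<in> H2 \<and> nsq (mult \<psi> q) \<le> M\<^sup>2 * nsq q"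
proof -
  define X where "X = (\<Sum>\<alpha>\<in>C. (cmod (q \<alpha>))\<^sup>2)"
  have X: "nsq q = X" unfolding X_def by (rule nsq_finite_support[OF C q0])
  have "(\<Sum>\<alpha>\<in>B. (cmod (mult \<psi> q \<alpha>))\<^sup>2) \<le> M\<^sup>2 * X" if B: "finite B" for B
  proof -
    have rb: "(\<Sum>\<alpha>\<in>B. (cmod (mult \<psi> q \<alpha>))\<^sup>2 * (Rr r \<alpha>)\<^sup>2) \<le> M\<^sup>2 * X" if r: "0 < r" "r < 1" for r
      unfolding X_def by (rule le_limit_eps) (rule core_bound[OF \<psi> M C q0 B r])
    have lim: "((\<lambda>r. \<Sum>\<alpha>\<in>B. (cmod (mult \<psi> q \<alpha>))\<^sup>2 * (Rr r \<alpha>)\<^sup>2) \<longlongrightarrow> (\<Sum>\<alpha>\<in>B. (cmod (mult \<psi> q \<alpha>))\<^sup>2 * (Rr 1 \<alpha>)\<^sup>2)) (at_left 1)"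
      unfolding Rr_def by (intro tendsto_intros)
    have ev: "eventually (\<lambda>r. (\<Sum>\<alpha>\<in>B. (cmod (mult \<psi> q \<alpha>))\<^sup>2 * (Rr r \<alpha>)\<^sup>2) \<le> M\<^sup>2 * X) (at_left (1::real))"
    proof -
      have "eventually (\<lambda>x. x \<in> {0<..<1}) (at_left (1::real))" by (rule eventually_at_left_real) simp
      thus ?thesis by eventually_elim (use rb in auto)
    qed
    have "(\<Sum>\<alpha>\<in>B. (cmod (mult \<psi> q \<alpha>))\<^sup>2 * (Rr 1 \<alpha>)\<^sup>2) \<le> M\<^sup>2 * X"
      by (rule tendsto_le[OF trivial_limit_at_left_real tendsto_const lim ev])
    thus ?thesis by (simp add: Rr_def)
  qed
  thus ?thesis using H2_from_finite_bound X by metis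
qed

lemma mult_bound:
  fixes \<psi> g :: "'n::finite coeffs"
  assumes \<psi>: "\<psi> \<in> H2" and M: "\<And>z. z \<in> polydisc \<Longrightarrow> cmod (h2_eval \<psi> z) \<le> M"
    and g: "g \<in> H2"
  shows "mult \<psi> g \<in> H2 \<and> nsq (mult \<psi> g) \<le> M\<^sup>2 * nsq g"
proof -
  have "(\<Sum>\<alpha>\<in>B. (cmod (mult \<psi> g \<alpha>))\<^sup>2) \<le> M\<^sup>2 * nsq g" if B: "finite B" for B
  proof -
    define D where "D = {\<beta>::'n \<Rightarrow> nat. \<exists>\<alpha>\<in>B. \<beta> \<le> \<alpha>}"
    have D: "finite D" unfolding D_def by (rule finite_downset[OF B])
    define gA where "gA \<beta> = (if \<beta> \<in> D then g \<beta> else 0)" for \<beta>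
    have gA0: "gA \<beta> = 0" if "\<beta> \<notin> D" for \<beta> using that by (simp add: gA_def)
    have fin: "mult \<psi> gA \<in> H2 \<and> nsq (mult \<psi> gA) \<le> M\<^sup>2 * nsq gA"
      by (rule mult_bound_fin[OF \<psi> M D gA0])
    have eq: "mult \<psi> g \<alpha> = mult \<psi> gA \<alpha>" if "\<alpha> \<in> B" for \<alpha>
    proof (rule mult_local)
      fix \<beta> assume "\<beta> \<le> \<alpha>" thus "g \<beta> = gA \<beta>" using that by (auto simp: gA_def D_def)
    qed
    have "(\<Sum>\<alpha>\<in>B. (cmod (mult \<psi> g \<alpha>))\<^sup>2) = (\<Sum>\<alpha>\<in>B. (cmod (mult \<psi> gA \<alpha>))\<^sup>2)"
      by (rule sum.cong[OF refl]) (simp add: eq)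
    also have "\<dots> \<le> nsq (mult \<psi> gA)"
      unfolding nsq_def by (rule finite_sum_le_infsum) (use fin B in \<open>auto simp: H2_iff\<close>)
    also have "\<dots> \<le> M\<^sup>2 * nsq gA" using fin by blast
    also have "nsq gA \<le> nsq g"
      unfolding nsq_def
    proof (rule infsum_mono)
      show "(\<lambda>\<alpha>. (cmod (gA \<alpha>))\<^sup>2) summable_on UNIV" using H2_finite_support[OF D gA0] by (simp add: H2_iff)
      show "(\<lambda>\<alpha>. (cmod (g \<alpha>))\<^sup>2) summable_on UNIV" using g by (simp add: H2_iff)
      show "(cmod (gA \<alpha>))\<^sup>2 \<le> (cmod (g \<alpha>))\<^sup>2" for \<alpha> by (simp add: gA_def)
    qed
    hence "M\<^sup>2 * nsq gA \<le> M\<^sup>2 * nsq g" by (simp add: mult_left_mono)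
    finally show ?thesis .
  qed
  thus ?thesis by (rule H2_from_finite_bound)
qed

lemma H2_sum: "finite C \<Longrightarrow> (\<And>\<gamma>. \<gamma> \<in> C \<Longrightarrow> F \<gamma> \<in> H2) \<Longrightarrow> (\<lambda>\<alpha>. \<Sum>\<gamma>\<in>C. F \<gamma> \<alpha>) \<in> H2"
proof (induction C rule: finite_induct)
  case empty
  show ?case using H2_finite_support[of "{}" "\<lambda>\<alpha>. 0"] by simp
next
  case (insert x C)
  have "(\<lambda>\<alpha>. F x \<alpha> + (\<Sum>\<gamma>\<in>C. F \<gamma> \<alpha>)) \<in> H2" using insert by (intro H2_add) auto
  thus ?case using insert by simp
qed

lemma h2_inner_sum:
  "finite C \<Longrightarrow> (\<And>\<gamma>. \<gamma> \<in> C \<Longrightarrow> F \<gamma> \<in> H2) \<Longrightarrow> h \<in> H2 \<Longrightarrow>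
   h2_inner (\<lambda>\<alpha>. \<Sum>\<gamma>\<in>C. F \<gamma> \<alpha>) h = (\<Sum>\<gamma>\<in>C. h2_inner (F \<gamma>) h)"
proof (induction C rule: finite_induct)
  case empty
  show ?case by (simp add: h2_inner_def)
next
  case (insert x C)
  have "h2_inner (\<lambda>\<alpha>. F x \<alpha> + (\<Sum>\<gamma>\<in>C. F \<gamma> \<alpha>)) h = h2_inner (F x) h + h2_inner (\<lambda>\<alpha>. \<Sum>\<gamma>\<in>C. F \<gamma> \<alpha>) h"
    using insert by (intro h2_inner_add_left H2_sum) auto
  thus ?case using insert by simp
qed

lemma fin_orth:
  assumes qm: "quotient_module Q" and \<psi>: "\<psi> \<in> H2" and orth: "\<forall>h\<in>Q. h2_inner \<psi> h = 0"
    and C: "finite C" and q0: "\<And>\<alpha>. \<alpha> \<notin> C \<Longrightarrow> q \<alpha> = 0" and h: "h \<in> Q"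
  shows "h2_inner (mult \<psi> q) h = 0"
proof -
  have cs: "closed_subspace Q" using qm by (simp add: quotient_module_def)
  have hH: "h \<in> H2" using h cs_H2[OF cs] by auto
  have "mult \<psi> q = (\<lambda>\<alpha>. \<Sum>\<gamma>\<in>C. q \<gamma> * sh \<gamma> \<psi> \<alpha>)"
    by (rule ext) (rule mult_shift_form[OF C q0])
  hence "h2_inner (mult \<psi> q) h = (\<Sum>\<gamma>\<in>C. h2_inner (\<lambda>\<alpha>. q \<gamma> * sh \<gamma> \<psi> \<alpha>) h)"
    using h2_inner_sum[OF C _ hH, of "\<lambda>\<gamma> \<alpha>. q \<gamma> * sh \<gamma> \<psi> \<alpha>"] \<psi> by (simp add: H2_scale sh_H2)
  also have "\<dots> = (\<Sum>\<gamma>\<in>C. q \<gamma> * h2_inner \<psi> (sadj \<gamma> h))"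
    by (simp add: h2_inner_scale_left sh_inner)
  also have "\<dots> = 0" using orth sadj_Q[OF qm h] by simp
  finally show ?thesis .
qed



lemma mult_orth:
  fixes \<psi> f h :: "'n::finite coeffs"
  assumes qm: "quotient_module Q" and \<psi>: "\<psi> \<in> H2" and orth: "\<forall>h\<in>Q. h2_inner \<psi> h = 0"
    and M: "\<And>z. z \<in> polydisc \<Longrightarrow> cmod (h2_eval \<psi> z) \<le> M"
    and f: "f \<in> H2" and h: "h \<in> Q"
  shows "h2_inner (mult \<psi> f) h = 0"
proof (rule ccontr)
  assume c0: "h2_inner (mult \<psi> f) h \<noteq> 0"
  define c where "c = cmod (h2_inner (mult \<psi> f) h)"
  have cpos: "c > 0" using c0 by (simp add: c_def)
  have cs: "closed_subspace Q" using qm by (simp add: quotient_module_def)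
  have hH: "h \<in> H2" using h cs_H2[OF cs] by auto
  define P where "P = nsq h"
  have P0: "P \<ge> 0" unfolding P_def by (rule nsq_nonneg)
  define \<tau> where "\<tau> = c / (P + 1)"
  have tpos: "\<tau> > 0" using cpos P0 by (simp add: \<tau>_def)
  define \<delta> where "\<delta> = \<tau> * c / (M\<^sup>2 + 1)"
  have M1: "M\<^sup>2 + 1 > 0" by (simp add: add_nonneg_pos)
  have dpos: "\<delta> > 0" using tpos cpos M1 unfolding \<delta>_def by (intro divide_pos_pos mult_pos_pos)
  define t where "t \<alpha> = (cmod (f \<alpha>))\<^sup>2" for \<alpha>
  have ts: "t summable_on UNIV" using f by (simp add: H2_iff t_def[abs_def])
  obtain A where A: "finite A" "\<bar>infsum t (UNIV - A)\<bar> < \<delta>"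
    using tail_small[OF ts dpos] by blast
  define fA where "fA \<beta> = (if \<beta> \<in> A then f \<beta> else 0)" for \<beta>
  have fA0: "fA \<beta> = 0" if "\<beta> \<notin> A" for \<beta> using that by (simp add: fA_def)
  have fAH: "fA \<in> H2" by (rule H2_finite_support[OF A(1) fA0])
  define d where "d = (\<lambda>\<alpha>. f \<alpha> - fA \<alpha>)"
  have dH: "d \<in> H2" unfolding d_def by (rule H2_diff[OF f fAH])
  have nd: "nsq d = infsum t (UNIV - A)"
    unfolding nsq_def d_def t_def by (rule infsum_cong_neutral) (auto simp: fA_def)
  have ub: "mult \<psi> d \<in> H2 \<and> nsq (mult \<psi> d) \<le> M\<^sup>2 * nsq d" by (rule mult_bound[OF \<psi> M dH])
  have mfA: "mult \<psi> fA \<in> H2" using mult_bound[OF \<psi> M fAH] by blast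
  have mf: "mult \<psi> f \<in> H2" using mult_bound[OF \<psi> M f] by blast
  have o0: "h2_inner (mult \<psi> fA) h = 0" by (rule fin_orth[OF qm \<psi> orth A(1) fA0 h])
  have "mult \<psi> d = (\<lambda>\<alpha>. mult \<psi> f \<alpha> - mult \<psi> fA \<alpha>)" unfolding d_def by (rule mult_diff_right)
  hence "h2_inner (mult \<psi> d) h = h2_inner (mult \<psi> f) h - h2_inner (mult \<psi> fA) h"
    using h2_inner_diff_left[OF mf mfA hH] by simp
  hence eqc: "h2_inner (mult \<psi> d) h = h2_inner (mult \<psi> f) h" using o0 by simp
  have "c \<le> (nsq (mult \<psi> d) / \<tau> + \<tau> * P) / 2"
    unfolding c_def P_def eqc[symmetric] by (rule h2_inner_bound) (use ub hH tpos in auto)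
  moreover have "nsq (mult \<psi> d) < \<tau> * c"
  proof -
    have "nsq d < \<delta>" using A(2) nd by simp
    hence "M\<^sup>2 * nsq d \<le> M\<^sup>2 * \<delta>" by (simp add: mult_left_mono)
    also have "M\<^sup>2 * \<delta> < \<tau> * c"
    proof -
      have "M\<^sup>2 * \<delta> = (\<tau> * c) * (M\<^sup>2 / (M\<^sup>2 + 1))" by (simp add: \<delta>_def field_simps)
      also have "\<dots> < (\<tau> * c) * 1"
        by (rule mult_strict_left_mono) (use tpos cpos M1 in \<open>auto simp: divide_less_eq\<close>)
      finally show ?thesis by simp
    qed
    finally show ?thesis using ub by linarith
  qed
  moreover have "\<tau> * P < c"
  proof -
    have "\<tau> * P = c * (P / (P + 1))" using P0 by (simp add: \<tau>_def field_simps)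
    also have "\<dots> < c * 1" by (rule mult_strict_left_mono) (use cpos P0 in auto)
    finally show ?thesis by simp
  qed
  moreover have "nsq (mult \<psi> d) / \<tau> < c" using \<open>nsq (mult \<psi> d) < \<tau> * c\<close> tpos
    by (simp add: divide_less_eq mult.commute)
  ultimately show False
  proof -
    fix a b :: real
    assume h1: "c \<le> (nsq (mult \<psi> d) / \<tau> + \<tau> * P) / 2" and h2: "nsq (mult \<psi> d) < \<tau> * c"
      and h3: "\<tau> * P < c" and h4: "nsq (mult \<psi> d) / \<tau> < c"
    have "nsq (mult \<psi> d) / \<tau> + \<tau> * P < c + c" using h4 h3 by (rule add_strict_mono)
    hence "(nsq (mult \<psi> d) / \<tau> + \<tau> * P) / 2 < c" by simp
    thus False using h1 by simp
  qed
qed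

lemma one_H2: "one \<in> H2"
  by (rule H2_finite_support[of "{\<lambda>i. 0}"]) (auto simp: one_def)

lemma h2_eval_one: "h2_eval one z = 1"
proof -
  have "h2_eval one z = infsum (\<lambda>\<alpha>. one \<alpha> * mon z \<alpha>) {\<lambda>i. 0}"
    unfolding h2_eval_mon by (rule infsum_cong_neutral) (auto simp: one_def)
  also have "\<dots> = 1" by (simp add: one_def mon_def)
  finally show ?thesis .
qed

lemma h2_eval_diff:
  assumes "f \<in> H2" "g \<in> H2" "z \<in> polydisc"
  shows "h2_eval (\<lambda>\<alpha>. f \<alpha> - g \<alpha>) z = h2_eval f z - h2_eval g z"
proof -
  obtain r where r: "0 \<le> r" "r < 1" "\<And>i. cmod (z i) \<le> r" using polydisc_radius[OF assms(3)] by blast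
  have "h2_eval (\<lambda>\<alpha>. f \<alpha> - g \<alpha>) z = (\<Sum>\<^sub>\<infinity>\<alpha>. f \<alpha> * mon z \<alpha> - g \<alpha> * mon z \<alpha>)"
    unfolding h2_eval_mon by (simp add: left_diff_distrib)
  also have "\<dots> = h2_eval f z - h2_eval g z"
    unfolding h2_eval_mon
    by (rule infsum_diff_gen) (use eval_summable[OF assms(1) r] eval_summable[OF assms(2) r] in auto)
  finally show ?thesis .
qed

theorem proposition6p4:
  fixes Q :: "('n::finite) coeffs set"
  assumes "quotient_module Q"
    and "proj Q one \<in> Hinf"
  shows "\<forall>f\<in>Q. compression Q (proj Q one) f = f"
proof
  fix f assume fQ: "f \<in> Q"
  note qm = assms(1)
  have cs: "closed_subspace Q" using qm by (simp add: quotient_module_def)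
  define \<theta> where "\<theta> = proj Q one"
  have pp: "\<theta> \<in> Q \<and> (\<forall>h\<in>Q. h2_inner (\<lambda>\<alpha>. one \<alpha> - \<theta> \<alpha>) h = 0)"
    unfolding \<theta>_def by (rule proj_prop[OF cs one_H2])
  have \<theta>H: "\<theta> \<in> H2" using pp cs_H2[OF cs] by auto
  define \<psi> where "\<psi> = (\<lambda>\<alpha>. one \<alpha> - \<theta> \<alpha>)"
  have \<psi>H: "\<psi> \<in> H2" unfolding \<psi>_def by (rule H2_diff[OF one_H2 \<theta>H])
  have orth: "\<forall>h\<in>Q. h2_inner \<psi> h = 0" using pp by (simp add: \<psi>_def)
  obtain M0 where M0: "\<And>z. z \<in> polydisc \<Longrightarrow> cmod (h2_eval \<theta> z) \<le> M0"
    using assms(2) unfolding \<theta>_def[symmetric] Hinf_def by blast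
  have M: "cmod (h2_eval \<psi> z) \<le> 1 + M0" if z: "z \<in> polydisc" for z
  proof -
    have "h2_eval \<psi> z = 1 - h2_eval \<theta> z"
      unfolding \<psi>_def h2_eval_diff[OF one_H2 \<theta>H z] h2_eval_one ..
    hence "cmod (h2_eval \<psi> z) \<le> 1 + cmod (h2_eval \<theta> z)"
      using norm_triangle_ineq4[of 1 "h2_eval \<theta> z"] by simp
    thus ?thesis using M0[OF z] by linarith
  qed
  have fH: "f \<in> H2" using fQ cs_H2[OF cs] by auto
  have mH: "mult \<psi> f \<in> H2" using mult_bound[OF \<psi>H M fH] by blast
  have \<theta>eq: "\<theta> = (\<lambda>\<alpha>. one \<alpha> - \<psi> \<alpha>)" by (simp add: \<psi>_def)
  have mt: "mult \<theta> f = (\<lambda>\<alpha>. f \<alpha> - mult \<psi> f \<alpha>)"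
    unfolding \<theta>eq mult_diff_left mult_one ..
  have xH: "(\<lambda>\<alpha>. f \<alpha> - mult \<psi> f \<alpha>) \<in> H2" by (rule H2_diff[OF fH mH])
  have "proj Q (\<lambda>\<alpha>. f \<alpha> - mult \<psi> f \<alpha>) = f"
  proof (rule proj_eq[OF cs xH fQ], rule ballI)
    fix h assume hQ: "h \<in> Q"
    have "h2_inner (\<lambda>\<alpha>. (f \<alpha> - mult \<psi> f \<alpha>) - f \<alpha>) h = h2_inner (\<lambda>\<alpha>. - mult \<psi> f \<alpha>) h"
      by simp
    also have "\<dots> = - h2_inner (mult \<psi> f) h" by (rule h2_inner_uminus_left)
    also have "h2_inner (mult \<psi> f) h = 0" by (rule mult_orth[OF qm \<psi>H orth M fH hQ])
    finally show "h2_inner (\<lambda>\<alpha>. (f \<alpha> - mult \<psi> f \<alpha>) - f \<alpha>) h = 0" by simp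
  qed
  thus "compression Q (proj Q one) f = f"
    unfolding compression_def \<theta>_def[symmetric] mt .
qed

end
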